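(* Let $G$ be a group which is the semidirect product of a normal subgroup $A$ and a subgroup $B$ (so $G=\langle A,B\rangle$, $A\trianglelefteq G$, $A\cap B=1$), with action $\theta:B\to \mathrm{Aut}(A)$, $\theta(b)(a)=a^b=b^{-1}ab$. Let $1\to R_1\to F_1\xrightarrow{\nu_1} A\to 1$ and $1\to R_2\to F_2\xrightarrow{\nu_2} B\to 1$ be free presentations of $A$ and $B$ (so $F_1,F_2$ are free groups, $\nu_1,\nu_2$ are epimorphisms with kernels $R_1,R_2$). Let $F=F_1*F_2$ be the free product, let $$S=\big\langle f_1^{-1}\overline{f_1}\,[f_2,f_1]\ \big|\ f_1,\overline{f_1}\in F_1,\ f_2\in F_2,\ \nu_1(\overline{f_1})=\theta(\nu_2 f_2)(\nu_1 f_1)\big\rangle^F,$$ and let $R=R_1^F R_2^F S$ (so that $1\to R\to F\to G\to 1$ is a free presentation of $G$). For $c\ge 1$ let $$\textstyle\prod[R_2,F_1,F_2]_c=\big\langle [r_2,f_1,\ldots,f_c]\ \big|\ r_2\in R_2,\ f_i\in F_1\cup F_2\ (1\le i\le c),\ f_k\in F_1 \text{ for some } k\big\rangle^F,$$ so that in particular $\prod[R_2,F_1,F_2]_1=[R_2,F_1]$. Then: (i) $R_1$ and $[R_2,F_1]$ are subgroups of $S$; (ii) $R=R_2S$; (iii) $R\cap\gamma_{c+1}(F)=(R_2\cap\gamma_{c+1}(F_2))(S\cap\gamma_{c+1}(F))$ for all $c\ge 1$; (iv) $[R,{}_cF]=[R_2,{}_cF_2]\,\prod[R_2,F_1,F_2]_c\,[S,{}_cF]$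 for all $c\ge 1$.
   Context: Commutators are $[x,y]=x^{-1}y^{-1}xy$ and are left-normed: $[x_1,\ldots,x_{n+1}]=[[x_1,\ldots,x_n],x_{n+1}]$. For a subset $X$ of $F$, $X^F$ or $\langle X\rangle^F$ denotes the normal closure of (the subgroup generated by) $X$ in $F$. $\gamma_{c+1}(F)$ is the $(c+1)$-st term of the lower central series of $F$, and $[R,{}_cF]=[R,F,\ldots,F]$ with $c$ copies of $F$. *)

theory Defs
  imports "HOL-Algebra.Algebra"
begin

definition comm :: "('a, 'b) monoid_scheme \<Rightarrow> 'a \<Rightarrow> 'a \<Rightarrow> 'a" where
  "comm G x y = inv\<^bsub>G\<^esub> x \<otimes>\<^bsub>G\<^esub> inv\<^bsub>G\<^esub> y \<otimes>\<^bsub>G\<^esub> x \<otimes>\<^bsub>G\<^esub> y"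

definition lcomm :: "('a, 'b) monoid_scheme \<Rightarrow> 'a \<Rightarrow> 'a list \<Rightarrow> 'a" where
  "lcomm G x ys = foldl (comm G) x ys"

definition comm_subgroup :: "('a, 'b) monoid_scheme \<Rightarrow> 'a set \<Rightarrow> 'a set \<Rightarrow> 'a set" where
  "comm_subgroup G H K = generate G {comm G h k | h k. h \<in> H \<and> k \<in> K}"

fun comm_iter :: "('a, 'b) monoid_scheme \<Rightarrow> 'a set \<Rightarrow> nat \<Rightarrow> 'a set" where
  "comm_iter G H 0 = H"
| "comm_iter G H (Suc n) = comm_subgroup G (comm_iter G H n) (carrier G)"

definition lower_central :: "('a, 'b) monoid_scheme \<Rightarrow> nat \<Rightarrow> 'a set" where
  "lower_central G n = comm_iter G (carrier G) (n - 1)"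

definition normal_closure :: "('a, 'b) monoid_scheme \<Rightarrow> 'a set \<Rightarrow> 'a set" where
  "normal_closure G Y = generate G {inv\<^bsub>G\<^esub> g \<otimes>\<^bsub>G\<^esub> y \<otimes>\<^bsub>G\<^esub> g | g y. g \<in> carrier G \<and> y \<in> Y}"

text \<open>Words over a set of letters (True = letter, False = inverse letter).\<close>
definition word_eval :: "('a, 'b) monoid_scheme \<Rightarrow> (bool \<times> 'a) list \<Rightarrow> 'a" where
  "word_eval G w = foldr (\<lambda>(e, x) acc. (if e then x else inv\<^bsub>G\<^esub> x) \<otimes>\<^bsub>G\<^esub> acc) w \<one>\<^bsub>G\<^esub>"

definition reduced_word :: "(bool \<times> 'a) list \<Rightarrow> bool" where
  "reduced_word w \<longleftrightarrow> (\<forall>i. Suc i < length w \<longrightarrow>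
       \<not> (snd (w ! i) = snd (w ! Suc i) \<and> fst (w ! i) \<noteq> fst (w ! Suc i)))"

definition free_group_on :: "('a, 'b) monoid_scheme \<Rightarrow> 'a set \<Rightarrow> bool" where
  "free_group_on F Y \<longleftrightarrow> group F \<and> Y \<subseteq> carrier F \<and> generate F Y = carrier F \<and>
     (\<forall>w. w \<noteq> [] \<and> set (map snd w) \<subseteq> Y \<and> reduced_word w \<longrightarrow> word_eval F w \<noteq> \<one>\<^bsub>F\<^esub>)"

definition free_group :: "('a, 'b) monoid_scheme \<Rightarrow> bool" where
  "free_group F \<longleftrightarrow> (\<exists>Y. free_group_on F Y)"

text \<open>F is the (internal) free product F1 * F2: F1, F2 subgroups with trivial intersection,
  generating F, and every nonempty alternating product of nontrivial factors is nontrivial.\<close>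
definition free_product :: "('a, 'b) monoid_scheme \<Rightarrow> 'a set \<Rightarrow> 'a set \<Rightarrow> bool" where
  "free_product F F1 F2 \<longleftrightarrow> group F \<and> subgroup F1 F \<and> subgroup F2 F \<and>
     F1 \<inter> F2 = {\<one>\<^bsub>F\<^esub>} \<and> generate F (F1 \<union> F2) = carrier F \<and>
     (\<forall>gs. gs \<noteq> [] \<and> set gs \<subseteq> (F1 \<union> F2) - {\<one>\<^bsub>F\<^esub>} \<and>
        (\<forall>i. Suc i < length gs \<longrightarrow> \<not> (gs ! i \<in> F1 \<and> gs ! Suc i \<in> F1) \<and>
                                   \<not> (gs ! i \<in> F2 \<and> gs ! Suc i \<in> F2))
        \<longrightarrow> foldr (\<otimes>\<^bsub>F\<^esub>) gs \<one>\<^bsub>F\<^esub> \<noteq> \<one>\<^bsub>F\<^esub>)"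

end

theory Submission
  imports Defs
begin


fun citer :: "('a, 'b) monoid_scheme \<Rightarrow> 'a set \<Rightarrow> 'a set \<Rightarrow> nat \<Rightarrow> 'a set" where
  "citer G Z Y 0 = Z"
| "citer G Z Y (Suc n) = comm_subgroup G (citer G Z Y n) Y"

lemma comm_iter_citer: "comm_iter G Z n = citer G Z (carrier G) n"
  by (induction n) auto

lemma lcomm_Nil [simp]: "lcomm G x [] = x"
  by (simp add: lcomm_def)
lemma lcomm_snoc [simp]: "lcomm G x (fs @ [f]) = comm G (lcomm G x fs) f"
  by (simp add: lcomm_def)

context group begin

lemma cancel1 [simp]: "x \<in> carrier G \<Longrightarrow> y \<in> carrier G \<Longrightarrow> x \<otimes> (inv x \<otimes> y) = y"
  by (simp add: m_assoc[symmetric])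
lemma cancel2 [simp]: "x \<in> carrier G \<Longrightarrow> y \<in> carrier G \<Longrightarrow> inv x \<otimes> (x \<otimes> y) = y"
  by (simp add: m_assoc[symmetric])

lemma comm_closed [simp]: "x \<in> carrier G \<Longrightarrow> y \<in> carrier G \<Longrightarrow> comm G x y \<in> carrier G"
  by (simp add: comm_def)

lemma comm_mult_right:
  assumes "x \<in> carrier G" "y \<in> carrier G" "z \<in> carrier G"
  shows "comm G x (y \<otimes> z) = comm G x z \<otimes> inv z \<otimes> comm G x y \<otimes> z"
  using assms by (simp add: comm_def m_assoc inv_mult_group)
lemma comm_mult_left:
  assumes "x \<in> carrier G" "y \<in> carrier G" "z \<in> carrier G"
  shows "comm G (x \<otimes> y) z = inv y \<otimes> comm G x z \<otimes> y \<otimes> comm G y z"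
  using assms by (simp add: comm_def m_assoc inv_mult_group)
lemma comm_conj:
  assumes "x \<in> carrier G" "y \<in> carrier G" "g \<in> carrier G"
  shows "inv g \<otimes> comm G x y \<otimes> g = comm G (inv g \<otimes> x \<otimes> g) (inv g \<otimes> y \<otimes> g)"
  using assms by (simp add: comm_def m_assoc inv_mult_group)
lemma comm_inv_left:
  assumes "x \<in> carrier G" "z \<in> carrier G"
  shows "comm G (inv x) z = x \<otimes> inv (comm G x z) \<otimes> inv x"
  using assms by (simp add: comm_def m_assoc inv_mult_group)
lemma comm_inv_right:
  assumes "x \<in> carrier G" "z \<in> carrier G"
  shows "comm G x (inv z) = z \<otimes> inv (comm G x z) \<otimes> inv z"
  using assms by (simp add: comm_def m_assoc inv_mult_group)
lemma inv_comm_eq: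
  assumes "x \<in> carrier G" "y \<in> carrier G"
  shows "inv (comm G x y) = comm G y x"
  using assms by (simp add: comm_def m_assoc inv_mult_group)
lemma conj_eq_comm:
  assumes "x \<in> carrier G" "g \<in> carrier G"
  shows "inv g \<otimes> x \<otimes> g = x \<otimes> comm G x g"
  using assms by (simp add: comm_def m_assoc inv_mult_group)
lemma comm_one_right [simp]: "x \<in> carrier G \<Longrightarrow> comm G x \<one> = \<one>"
  by (simp add: comm_def m_assoc)
lemma comm_one_left [simp]: "x \<in> carrier G \<Longrightarrow> comm G \<one> x = \<one>"
  by (simp add: comm_def m_assoc)

lemma normal_conjI:
  assumes "subgroup N G" "\<And>g h. g \<in> carrier G \<Longrightarrow> h \<in> N \<Longrightarrow> inv g \<otimes> h \<otimes> g \<in> N"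
  shows "N \<lhd> G"
  unfolding normal_inv_iff
proof (intro conjI ballI assms(1))
  fix x h assume "x \<in> carrier G" "h \<in> N"
  then show "x \<otimes> h \<otimes> inv x \<in> N" using assms(2)[of "inv x" h] by simp
qed

lemma normal_conj:
  "N \<lhd> G \<Longrightarrow> g \<in> carrier G \<Longrightarrow> h \<in> N \<Longrightarrow> inv g \<otimes> h \<otimes> g \<in> N"
  by (rule normal.inv_op_closed1)

lemma normal_conj2:
  "N \<lhd> G \<Longrightarrow> g \<in> carrier G \<Longrightarrow> h \<in> N \<Longrightarrow> g \<otimes> h \<otimes> inv g \<in> N"
  by (rule normal.inv_op_closed2)

lemma conj_set_sub:
  "Y \<subseteq> carrier G \<Longrightarrow> {inv g \<otimes> y \<otimes> g | g y. g \<in> carrier G \<and> y \<in> Y} \<subseteq> carrier G"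
  by auto

lemma nc_normal:
  assumes "Y \<subseteq> carrier G" shows "normal_closure G Y \<lhd> G"
  unfolding normal_closure_def
proof (rule normal_generateI[OF conj_set_sub[OF assms]])
  fix h g assume h: "h \<in> {inv g \<otimes> y \<otimes> g | g y. g \<in> carrier G \<and> y \<in> Y}" and g: "g \<in> carrier G"
  then obtain g' y where h': "h = inv g' \<otimes> y \<otimes> g'" "g' \<in> carrier G" "y \<in> Y" by blast
  have "g \<otimes> h \<otimes> inv g = inv (g' \<otimes> inv g) \<otimes> y \<otimes> (g' \<otimes> inv g)"
    using h' g assms by (auto simp: m_assoc inv_mult_group)
  then show "g \<otimes> h \<otimes> inv g \<in> {inv g \<otimes> y \<otimes> g | g y. g \<in> carrier G \<and> y \<in> Y}"
    using h' g by blast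
qed

lemma nc_subgroup: "Y \<subseteq> carrier G \<Longrightarrow> subgroup (normal_closure G Y) G"
  by (rule normal_imp_subgroup[OF nc_normal])

lemma nc_incl:
  assumes "Y \<subseteq> carrier G" "y \<in> Y" shows "y \<in> normal_closure G Y"
proof -
  have "y = inv \<one> \<otimes> y \<otimes> \<one>" using assms by auto
  then show ?thesis unfolding normal_closure_def
    by (intro generate.incl) (use assms in blast)
qed

lemma nc_conj_incl:
  assumes "g \<in> carrier G" "y \<in> Y" shows "inv g \<otimes> y \<otimes> g \<in> normal_closure G Y"
  unfolding normal_closure_def by (intro generate.incl) (use assms in blast)

lemma nc_closure_set:
  assumes "subgroup C G" "Y \<subseteq> C" "\<And>g x. g \<in> carrier G \<Longrightarrow> x \<in> C \<Longrightarrow> inv g \<otimes> x \<otimes> g \<in> C"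
  shows "normal_closure G Y \<subseteq> C"
  unfolding normal_closure_def
  by (rule generate_subgroup_incl[OF _ assms(1)]) (use assms in blast)

lemma nc_min: "N \<lhd> G \<Longrightarrow> Y \<subseteq> N \<Longrightarrow> normal_closure G Y \<subseteq> N"
  by (rule nc_closure_set) (auto intro: normal_imp_subgroup normal_conj)

lemma nc_mono: "Y \<subseteq> Z \<Longrightarrow> Z \<subseteq> carrier G \<Longrightarrow> normal_closure G Y \<subseteq> normal_closure G Z"
  by (rule nc_min[OF nc_normal]) (auto intro: nc_incl)

lemma normal_by_gens:
  assumes H: "subgroup H G" and Z: "Z \<subseteq> carrier G" "generate G Z = carrier G"
    and Zinv: "\<And>x. x \<in> Z \<Longrightarrow> inv x \<in> Z"
    and cl: "\<And>x h. x \<in> Z \<Longrightarrow> h \<in> H \<Longrightarrow> inv x \<otimes> h \<otimes> x \<in> H"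
  shows "H \<lhd> G"
proof -
  define W where "W = {g \<in> carrier G. \<forall>h\<in>H. inv g \<otimes> h \<otimes> g \<in> H \<and> g \<otimes> h \<otimes> inv g \<in> H}"
  have Hc: "\<And>h. h \<in> H \<Longrightarrow> h \<in> carrier G" by (rule subgroup.mem_carrier[OF H])
  have Wc: "\<And>a. a \<in> W \<Longrightarrow> a \<in> carrier G" by (simp add: W_def)
  have W1: "\<And>a h. a \<in> W \<Longrightarrow> h \<in> H \<Longrightarrow> inv a \<otimes> h \<otimes> a \<in> H" by (simp add: W_def)
  have W2: "\<And>a h. a \<in> W \<Longrightarrow> h \<in> H \<Longrightarrow> a \<otimes> h \<otimes> inv a \<in> H" by (simp add: W_def)
  have WI: "\<And>a. a \<in> carrier G \<Longrightarrow> (\<And>h. h \<in> H \<Longrightarrow> inv a \<otimes> h \<otimes> a \<in> H) \<Longrightarrow>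
     (\<And>h. h \<in> H \<Longrightarrow> a \<otimes> h \<otimes> inv a \<in> H) \<Longrightarrow> a \<in> W" by (simp add: W_def)
  have "subgroup W G"
  proof (rule subgroupI)
    show "W \<subseteq> carrier G" using Wc by blast
    have "\<one> \<in> W" by (rule WI) (simp_all add: Hc)
    then show "W \<noteq> {}" by blast
  next
    fix a assume a: "a \<in> W"
    have ac: "a \<in> carrier G" using a Wc by auto
    show "inv a \<in> W"
    proof (rule WI)
      fix h assume h: "h \<in> H"
      show "inv (inv a) \<otimes> h \<otimes> inv a \<in> H" using W2[OF a h] ac by simp
      show "inv a \<otimes> h \<otimes> inv (inv a) \<in> H" using W1[OF a h] ac by simp
    qed (use ac in simp)
  next
    fix a b assume a: "a \<in> W" and b: "b \<in> W"
    have ac: "a \<in> carrier G" and bc: "b \<in> carrier G" using a b Wc by auto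
    show "a \<otimes> b \<in> W"
    proof (rule WI)
      fix h assume h: "h \<in> H"
      have e1: "inv (a \<otimes> b) \<otimes> h \<otimes> (a \<otimes> b) = inv b \<otimes> (inv a \<otimes> h \<otimes> a) \<otimes> b"
        using ac bc Hc[OF h] by (simp add: inv_mult_group m_assoc)
      have e2: "a \<otimes> b \<otimes> h \<otimes> inv (a \<otimes> b) = a \<otimes> (b \<otimes> h \<otimes> inv b) \<otimes> inv a"
        using ac bc Hc[OF h] by (simp add: inv_mult_group m_assoc)
      show "inv (a \<otimes> b) \<otimes> h \<otimes> (a \<otimes> b) \<in> H" unfolding e1 using W1[OF b W1[OF a h]] .
      show "a \<otimes> b \<otimes> h \<otimes> inv (a \<otimes> b) \<in> H" unfolding e2 using W2[OF a W2[OF b h]] .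
    qed (use ac bc in simp)
  qed
  moreover have "Z \<subseteq> W"
  proof
    fix x assume x: "x \<in> Z"
    have xc: "x \<in> carrier G" using x Z by blast
    show "x \<in> W"
    proof (rule WI[OF xc])
      fix h assume h: "h \<in> H"
      show "inv x \<otimes> h \<otimes> x \<in> H" using cl[OF x h] .
      show "x \<otimes> h \<otimes> inv x \<in> H" using cl[OF Zinv[OF x] h] xc by simp
    qed
  qed
  ultimately have "carrier G \<subseteq> W" using generate_subgroup_incl[of Z W] Z by simp
  then show ?thesis
    by (intro normal_conjI[OF H] W1) blast+
qed

lemma right_comm_subgroup:
  assumes N: "N \<lhd> G" and x: "x \<in> carrier G"
  shows "subgroup {f \<in> carrier G. comm G x f \<in> N} G"
proof -
  have Ns: "subgroup N G" by (rule normal_imp_subgroup[OF N])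
  show ?thesis
  proof (rule subgroupI)
    show "{f \<in> carrier G. comm G x f \<in> N} \<subseteq> carrier G" by blast
    have "\<one> \<in> {f \<in> carrier G. comm G x f \<in> N}" using x subgroup.one_closed[OF Ns] by simp
    then show "{f \<in> carrier G. comm G x f \<in> N} \<noteq> {}" by blast
  next
    fix a assume a: "a \<in> {f \<in> carrier G. comm G x f \<in> N}"
    then have ac: "a \<in> carrier G" and an: "comm G x a \<in> N" by auto
    have "comm G x (inv a) = a \<otimes> inv (comm G x a) \<otimes> inv a" using comm_inv_right[OF x ac] .
    moreover have "a \<otimes> inv (comm G x a) \<otimes> inv a \<in> N"
      by (rule normal_conj2[OF N ac subgroup.m_inv_closed[OF Ns an]])
    ultimately show "inv a \<in> {f \<in> carrier G. comm G x f \<in> N}" using ac by simp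
  next
    fix a b assume a: "a \<in> {f \<in> carrier G. comm G x f \<in> N}" and b: "b \<in> {f \<in> carrier G. comm G x f \<in> N}"
    then have ac: "a \<in> carrier G" and an: "comm G x a \<in> N" and bc: "b \<in> carrier G" and bn: "comm G x b \<in> N" by auto
    have "comm G x (a \<otimes> b) = comm G x b \<otimes> (inv b \<otimes> comm G x a \<otimes> b)"
      using comm_mult_right[OF x ac bc] x ac bc by (simp add: m_assoc)
    moreover have "comm G x b \<otimes> (inv b \<otimes> comm G x a \<otimes> b) \<in> N"
      by (rule subgroup.m_closed[OF Ns bn normal_conj[OF N bc an]])
    ultimately show "a \<otimes> b \<in> {f \<in> carrier G. comm G x f \<in> N}" using ac bc by simp
  qed
qed

lemma left_comm_subgroup:
  assumes N: "N \<lhd> G" and K: "K \<subseteq> carrier G"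
  shows "subgroup {y \<in> carrier G. \<forall>f\<in>K. comm G y f \<in> N} G"
proof -
  have Ns: "subgroup N G" by (rule normal_imp_subgroup[OF N])
  show ?thesis
  proof (rule subgroupI)
    show "{y \<in> carrier G. \<forall>f\<in>K. comm G y f \<in> N} \<subseteq> carrier G" by blast
    have "\<one> \<in> {y \<in> carrier G. \<forall>f\<in>K. comm G y f \<in> N}" using K subgroup.one_closed[OF Ns] by (auto simp: subset_iff)
    then show "{y \<in> carrier G. \<forall>f\<in>K. comm G y f \<in> N} \<noteq> {}" by blast
  next
    fix a assume a: "a \<in> {y \<in> carrier G. \<forall>f\<in>K. comm G y f \<in> N}"
    then have ac: "a \<in> carrier G" and an: "\<And>f. f \<in> K \<Longrightarrow> comm G a f \<in> N" by auto
    have "comm G (inv a) f \<in> N" if f: "f \<in> K" for f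
    proof -
      have fc: "f \<in> carrier G" using f K by blast
      have "comm G (inv a) f = a \<otimes> inv (comm G a f) \<otimes> inv a" using comm_inv_left[OF ac fc] .
      moreover have "a \<otimes> inv (comm G a f) \<otimes> inv a \<in> N"
        by (rule normal_conj2[OF N ac subgroup.m_inv_closed[OF Ns an[OF f]]])
      ultimately show ?thesis by simp
    qed
    then show "inv a \<in> {y \<in> carrier G. \<forall>f\<in>K. comm G y f \<in> N}" using ac by simp
  next
    fix a b assume a: "a \<in> {y \<in> carrier G. \<forall>f\<in>K. comm G y f \<in> N}" and b: "b \<in> {y \<in> carrier G. \<forall>f\<in>K. comm G y f \<in> N}"
    then have ac: "a \<in> carrier G" and an: "\<And>f. f \<in> K \<Longrightarrow> comm G a f \<in> N"
      and bc: "b \<in> carrier G" and bn: "\<And>f. f \<in> K \<Longrightarrow> comm G b f \<in> N" by auto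
    have "comm G (a \<otimes> b) f \<in> N" if f: "f \<in> K" for f
    proof -
      have fc: "f \<in> carrier G" using f K by blast
      have "comm G (a \<otimes> b) f = (inv b \<otimes> comm G a f \<otimes> b) \<otimes> comm G b f"
        using comm_mult_left[OF ac bc fc] .
      moreover have "(inv b \<otimes> comm G a f \<otimes> b) \<otimes> comm G b f \<in> N"
        by (rule subgroup.m_closed[OF Ns normal_conj[OF N bc an[OF f]] bn[OF f]])
      ultimately show ?thesis by simp
    qed
    then show "a \<otimes> b \<in> {y \<in> carrier G. \<forall>f\<in>K. comm G y f \<in> N}" using ac bc by simp
  qed
qed

lemma left_comm_conj:
  assumes N: "N \<lhd> G" and y: "y \<in> carrier G" and h: "\<forall>f\<in>carrier G. comm G y f \<in> N"
    and g: "g \<in> carrier G" and f: "f \<in> carrier G"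
  shows "comm G (inv g \<otimes> y \<otimes> g) f \<in> N"
proof -
  have "comm G (inv g \<otimes> y \<otimes> g) f = inv g \<otimes> comm G y (g \<otimes> f \<otimes> inv g) \<otimes> g"
    using comm_conj[of y "g \<otimes> f \<otimes> inv g" g] y g f by (simp add: m_assoc)
  then show ?thesis using h g f y by (auto intro!: normal_conj[OF N])
qed

lemma subgroup_mult_normal:
  assumes H: "subgroup H G" and N: "N \<lhd> G"
  shows "subgroup (H <#> N) G"
proof -
  have Ns: "subgroup N G" by (rule normal_imp_subgroup[OF N])
  have Hc: "\<And>h. h \<in> H \<Longrightarrow> h \<in> carrier G" by (rule subgroup.mem_carrier[OF H])
  have Nc: "\<And>h. h \<in> N \<Longrightarrow> h \<in> carrier G" by (rule subgroup.mem_carrier[OF Ns])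
  show ?thesis
  proof (rule subgroupI)
  show "H <#> N \<subseteq> carrier G" using Hc Nc by (auto simp: set_mult_def)
  show "H <#> N \<noteq> {}" using subgroup.one_closed[OF H] subgroup.one_closed[OF Ns]
    by (auto simp: set_mult_def)
  next
  fix a assume a: "a \<in> H <#> N"
  obtain h n where hn: "h \<in> H" "n \<in> N" "a = h \<otimes> n" using a by (auto simp: set_mult_def)
  have "inv a = inv h \<otimes> (h \<otimes> inv n \<otimes> inv h)"
    using hn Hc Nc by (simp add: inv_mult_group m_assoc)
  moreover have "h \<otimes> inv n \<otimes> inv h \<in> N"
    using hn Hc Nc by (auto intro!: normal_conj2[OF N] subgroup.m_inv_closed[OF Ns])
  ultimately show "inv a \<in> H <#> N" using subgroup.m_inv_closed[OF H hn(1)]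
    unfolding set_mult_def by blast
  next
  fix a b assume a: "a \<in> H <#> N" and b: "b \<in> H <#> N"
  obtain h n where hn: "h \<in> H" "n \<in> N" "a = h \<otimes> n" using a by (auto simp: set_mult_def)
  obtain h' n' where hn': "h' \<in> H" "n' \<in> N" "b = h' \<otimes> n'" using b by (auto simp: set_mult_def)
  have "a \<otimes> b = (h \<otimes> h') \<otimes> ((inv h' \<otimes> n \<otimes> h') \<otimes> n')"
    using hn hn' Hc Nc by (simp add: m_assoc)
  moreover have "(inv h' \<otimes> n \<otimes> h') \<otimes> n' \<in> N"
    by (rule subgroup.m_closed[OF Ns normal_conj[OF N Hc[OF hn'(1)] hn(2)] hn'(2)])
  ultimately show "a \<otimes> b \<in> H <#> N" using subgroup.m_closed[OF H hn(1) hn'(1)]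
    unfolding set_mult_def by blast
  qed
qed

lemma set_mult_memI: "h \<in> H \<Longrightarrow> k \<in> K \<Longrightarrow> h \<otimes> k \<in> H <#> K"
  by (auto simp: set_mult_def)

lemma set_mult_sub_subgroup:
  assumes "subgroup Q G" "H \<subseteq> Q" "K \<subseteq> Q" shows "H <#> K \<subseteq> Q"
  using assms by (auto simp: set_mult_def intro: subgroup.m_closed)

lemma comm_subgroup_sub:
  assumes "subgroup Q G" "\<And>h k. h \<in> H \<Longrightarrow> k \<in> K \<Longrightarrow> comm G h k \<in> Q"
  shows "comm_subgroup G H K \<subseteq> Q"
  unfolding comm_subgroup_def by (rule generate_subgroup_incl[OF _ assms(1)]) (use assms in blast)

lemma comm_subgroup_incl:
  "h \<in> H \<Longrightarrow> k \<in> K \<Longrightarrow> comm G h k \<in> comm_subgroup G H K"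
  unfolding comm_subgroup_def by (intro generate.incl) blast

lemma comm_subgroup_is_subgroup:
  "H \<subseteq> carrier G \<Longrightarrow> K \<subseteq> carrier G \<Longrightarrow> subgroup (comm_subgroup G H K) G"
  unfolding comm_subgroup_def by (rule generate_is_subgroup) (auto simp: subset_iff)

lemma comm_subgroup_mono:
  "H \<subseteq> H' \<Longrightarrow> K \<subseteq> K' \<Longrightarrow> comm_subgroup G H K \<subseteq> comm_subgroup G H' K'"
  unfolding comm_subgroup_def by (rule mono_generate) blast

lemma citer_carrier: assumes "Z \<subseteq> carrier G" "K \<subseteq> carrier G" shows "citer G Z K n \<subseteq> carrier G"
proof (induction n)
  case 0 then show ?case using assms by simp
next
  case (Suc n) show ?case using subgroup.subset[OF comm_subgroup_is_subgroup[OF Suc.IH assms(2)]] by simp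
qed

lemma citer_mono: "Z \<subseteq> Z' \<Longrightarrow> K \<subseteq> K' \<Longrightarrow> citer G Z K n \<subseteq> citer G Z' K' n"
proof (induction n)
  case (Suc n) then show ?case using comm_subgroup_mono[of "citer G Z K n" "citer G Z' K' n" K K'] by simp
qed simp

lemma citer_subgroup: assumes "Z \<subseteq> carrier G" "K \<subseteq> carrier G" "0 < n" shows "subgroup (citer G Z K n) G"
proof (cases n)
  case (Suc m) then show ?thesis using comm_subgroup_is_subgroup[OF citer_carrier[OF assms(1,2)] assms(2), of m] by simp
qed (use assms in simp)

lemma comm_subgroup_normal:
  assumes N: "N \<lhd> G" shows "comm_subgroup G N (carrier G) \<lhd> G"
  unfolding comm_subgroup_def
proof (rule normal_generateI)
  have Nc: "\<And>h. h \<in> N \<Longrightarrow> h \<in> carrier G" by (rule subgroup.mem_carrier[OF normal_imp_subgroup[OF N]])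
  show "{comm G h k |h k. h \<in> N \<and> k \<in> carrier G} \<subseteq> carrier G" using Nc by auto
  fix h g assume h: "h \<in> {comm G h k |h k. h \<in> N \<and> k \<in> carrier G}" and g: "g \<in> carrier G"
  then obtain a k where ak: "h = comm G a k" "a \<in> N" "k \<in> carrier G" by blast
  have "g \<otimes> h \<otimes> inv g = comm G (g \<otimes> a \<otimes> inv g) (g \<otimes> k \<otimes> inv g)"
    using comm_conj[of a k "inv g"] ak g Nc by simp
  moreover have "g \<otimes> a \<otimes> inv g \<in> N" using normal_conj2[OF N g ak(2)] .
  ultimately show "g \<otimes> h \<otimes> inv g \<in> {comm G h k |h k. h \<in> N \<and> k \<in> carrier G}"
    using g ak by blast
qed

lemma citer_normal: "N \<lhd> G \<Longrightarrow> citer G N (carrier G) n \<lhd> G"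
  by (induction n) (auto intro: comm_subgroup_normal)

lemma lcomm_closed: "x \<in> carrier G \<Longrightarrow> set fs \<subseteq> carrier G \<Longrightarrow> lcomm G x fs \<in> carrier G"
  by (induction fs rule: rev_induct) auto

lemma lcomm_in_citer:
  assumes "x \<in> Z" "set fs \<subseteq> K"
  shows "lcomm G x fs \<in> citer G Z K (length fs)"
  using assms(2)
proof (induction fs rule: rev_induct)
  case Nil then show ?case using assms by simp
next
  case (snoc f fs) then show ?case by (simp add: comm_subgroup_incl)
qed

lemma lcomm_conj:
  assumes "g \<in> carrier G" "x \<in> carrier G" "set fs \<subseteq> carrier G"
  shows "inv g \<otimes> lcomm G x fs \<otimes> g = lcomm G (inv g \<otimes> x \<otimes> g) (map (\<lambda>f. inv g \<otimes> f \<otimes> g) fs)"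
  using assms(3)
proof (induction fs rule: rev_induct)
  case Nil then show ?case by simp
next
  case (snoc f fs) then show ?case using assms by (simp add: comm_conj lcomm_closed)
qed

end



definition prodl :: "('a, 'b) monoid_scheme \<Rightarrow> 'a list \<Rightarrow> 'a" where
  "prodl G ws = foldr (\<lambda>w acc. w \<otimes>\<^bsub>G\<^esub> acc) ws \<one>\<^bsub>G\<^esub>"
definition projl :: "('a, 'b) monoid_scheme \<Rightarrow> 'a set \<Rightarrow> 'a list \<Rightarrow> 'a" where
  "projl G F2 ws = foldr (\<lambda>w acc. (if w \<in> F2 then w else \<one>\<^bsub>G\<^esub>) \<otimes>\<^bsub>G\<^esub> acc) ws \<one>\<^bsub>G\<^esub>"

fun alt :: "'a set \<Rightarrow> 'a set \<Rightarrow> 'a list \<Rightarrow> bool" where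
  "alt A B [] = True"
| "alt A B [x] = True"
| "alt A B (x # y # r) = (\<not> (x \<in> A \<and> y \<in> A) \<and> \<not> (x \<in> B \<and> y \<in> B) \<and> alt A B (y # r))"

lemma alt_nth:
  "alt A B gs \<Longrightarrow> Suc i < length gs \<Longrightarrow> \<not> (gs ! i \<in> A \<and> gs ! Suc i \<in> A) \<and> \<not> (gs ! i \<in> B \<and> gs ! Suc i \<in> B)"
proof (induction A B gs arbitrary: i rule: alt.induct)
  case (3 A B x y r)
  then show ?case by (cases i) auto
qed auto

lemma alt_tl: "alt A B (x # r) \<Longrightarrow> alt A B r"
  by (cases r) auto

lemma prodl_simps [simp]: "prodl G [] = \<one>\<^bsub>G\<^esub>" "prodl G (w # ws) = w \<otimes>\<^bsub>G\<^esub> prodl G ws"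
  by (simp_all add: prodl_def)
lemma projl_simps [simp]: "projl G F2 [] = \<one>\<^bsub>G\<^esub>"
  "projl G F2 (w # ws) = (if w \<in> F2 then w else \<one>\<^bsub>G\<^esub>) \<otimes>\<^bsub>G\<^esub> projl G F2 ws"
  by (simp_all add: projl_def)

definition invl :: "('a, 'b) monoid_scheme \<Rightarrow> 'a list \<Rightarrow> 'a list" where
  "invl G ws = rev (map (\<lambda>w. inv\<^bsub>G\<^esub> w) ws)"

context group begin

lemma prodl_closed: "set ws \<subseteq> carrier G \<Longrightarrow> prodl G ws \<in> carrier G"
  by (induction ws) auto

lemma projl_in: "subgroup F2 G \<Longrightarrow> projl G F2 ws \<in> F2"
  by (induction ws) (auto intro: subgroup.m_closed subgroup.one_closed)

lemma prodl_append: "set ws \<subseteq> carrier G \<Longrightarrow> set vs \<subseteq> carrier G \<Longrightarrow> prodl G (ws @ vs) = prodl G ws \<otimes> prodl G vs"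
  by (induction ws) (auto simp: m_assoc prodl_closed)

lemma projl_append: "subgroup F2 G \<Longrightarrow> set ws \<subseteq> carrier G \<Longrightarrow> projl G F2 (ws @ vs) = projl G F2 ws \<otimes> projl G F2 vs"
proof (induction ws)
  case Nil then show ?case using projl_in[OF Nil(1), of vs] subgroup.mem_carrier[OF Nil(1)] by simp
next
  case (Cons w ws)
  have c1: "projl G F2 ws \<in> carrier G" "projl G F2 vs \<in> carrier G"
    using projl_in[OF Cons(2)] subgroup.mem_carrier[OF Cons(2)] by auto
  have c2: "(if w \<in> F2 then w else \<one>) \<in> carrier G" using Cons(3) by auto
  show ?case using Cons c1 c2 by (simp add: m_assoc)
qed

lemma invl_simps: "invl G [] = []" "invl G (w # ws) = invl G ws @ [inv w]"
  by (simp_all add: invl_def)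

lemma set_invl: "set (invl G ws) = (\<lambda>w. inv w) ` set ws" by (simp add: invl_def)

lemma prodl_invl: "set ws \<subseteq> carrier G \<Longrightarrow> prodl G (invl G ws) = inv (prodl G ws)"
proof (induction ws)
  case Nil then show ?case by (simp add: invl_simps)
next
  case (Cons w ws)
  have s: "set (invl G ws) \<subseteq> carrier G" using Cons(2) by (auto simp: set_invl)
  show ?case using Cons s by (simp add: invl_simps prodl_append inv_mult_group prodl_closed)
qed

lemma inv_in_sub_iff: "subgroup H G \<Longrightarrow> w \<in> carrier G \<Longrightarrow> inv w \<in> H \<longleftrightarrow> w \<in> H"
  by (metis inv_inv subgroup.m_inv_closed)

lemma projl_invl: "subgroup F2 G \<Longrightarrow> set ws \<subseteq> carrier G \<Longrightarrow> projl G F2 (invl G ws) = inv (projl G F2 ws)"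
proof (induction ws)
  case Nil then show ?case by (simp add: invl_simps)
next
  case (Cons w ws)
  have s: "set (invl G ws) \<subseteq> carrier G" using Cons(3) by (auto simp: set_invl)
  have c1: "projl G F2 ws \<in> carrier G"
    using projl_in[OF Cons(2)] subgroup.mem_carrier[OF Cons(2)] by auto
  have w: "w \<in> carrier G" using Cons(3) by auto
  show ?case using Cons s c1 w inv_in_sub_iff[OF Cons(2) w]
    by (simp add: invl_simps projl_append inv_mult_group)
qed


lemma reduce_word:
  assumes F1: "subgroup F1 G" and F2: "subgroup F2 G" and I: "F1 \<inter> F2 = {\<one>}"
  shows "set ws \<subseteq> F1 \<union> F2 \<Longrightarrow> \<exists>vs. set vs \<subseteq> (F1 \<union> F2) - {\<one>} \<and> alt F1 F2 vs \<and>
            prodl G vs = prodl G ws \<and> projl G F2 vs = projl G F2 ws"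
proof (induction ws)
  case Nil then show ?case by (intro exI[of _ "[]"]) simp
next
  case (Cons w ws)
  have c1: "\<And>x. x \<in> F1 \<Longrightarrow> x \<in> carrier G" by (rule subgroup.mem_carrier[OF F1])
  have c2: "\<And>x. x \<in> F2 \<Longrightarrow> x \<in> carrier G" by (rule subgroup.mem_carrier[OF F2])
  have w: "w \<in> F1 \<union> F2" and ws: "set ws \<subseteq> F1 \<union> F2" using Cons(2) by auto
  have wc: "w \<in> carrier G" using w c1 c2 by blast
  have wsc: "set ws \<subseteq> carrier G" using ws c1 c2 by blast
  obtain vs where vs: "set vs \<subseteq> (F1 \<union> F2) - {\<one>}" "alt F1 F2 vs"
      "prodl G vs = prodl G ws" "projl G F2 vs = projl G F2 ws"
    using Cons(1)[OF ws] by blast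
  have vsc: "set vs \<subseteq> carrier G" using vs(1) c1 c2 by blast
  have pc: "projl G F2 ws \<in> carrier G" using c2 projl_in[OF F2] by blast
  have prc: "prodl G ws \<in> carrier G" using prodl_closed[OF wsc] .
  have one2: "\<one> \<in> F2" by (rule subgroup.one_closed[OF F2])
  have nF2: "\<And>x. x \<in> F1 \<Longrightarrow> x \<noteq> \<one> \<Longrightarrow> x \<notin> F2" using I by blast
  show ?case
  proof (cases "w = \<one>")
    case True
    then show ?thesis using vs one2 pc prc by (intro exI[of _ vs]) simp
  next
    case wne: False
    show ?thesis
    proof (cases vs)
      case Nil
      then show ?thesis using vs wne w wc by (intro exI[of _ "[w]"]) auto
    next
      case (Cons v vs')
      have v: "v \<in> F1 \<union> F2" "v \<noteq> \<one>" and vs': "set vs' \<subseteq> (F1 \<union> F2) - {\<one>}"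
        using vs(1) Cons by auto
      have vc: "v \<in> carrier G" using v c1 c2 by blast
      have vs'c: "set vs' \<subseteq> carrier G" using vs' c1 c2 by blast
      have altvs': "alt F1 F2 vs'" using alt_tl[of F1 F2 v vs'] vs(2) Cons by simp
      have pvs'c: "projl G F2 vs' \<in> carrier G" using c2 projl_in[OF F2] by blast
      have prvs'c: "prodl G vs' \<in> carrier G" using prodl_closed[OF vs'c] .
      have eqprod: "prodl G vs = v \<otimes> prodl G vs'" using Cons by simp
      have eqproj: "projl G F2 vs = (if v \<in> F2 then v else \<one>) \<otimes> projl G F2 vs'" using Cons by simp
      show ?thesis
      proof (cases "(w \<in> F1 \<and> v \<in> F1) \<or> (w \<in> F2 \<and> v \<in> F2)")
        case same: True
        define u where "u = w \<otimes> v"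
        have uc: "u \<in> carrier G" using u_def wc vc by simp
        have prod_eq: "prodl G (w # ws) = u \<otimes> prodl G vs'"
          using vs(3) eqprod wc vc prvs'c by (simp add: u_def m_assoc)
        have proj_eq: "projl G F2 (w # ws) = (if u \<in> F2 then u else \<one>) \<otimes> projl G F2 vs'"
        proof (cases "w \<in> F2 \<and> v \<in> F2")
          case True
          then have "u \<in> F2" using u_def subgroup.m_closed[OF F2] by blast
          then show ?thesis using True vs(4) eqproj wc vc pvs'c by (simp add: u_def m_assoc)
        next
          case False
          then have "w \<in> F1" "v \<in> F1" using same by auto
          then have "w \<notin> F2" "v \<notin> F2" "u \<in> F1" using nF2 wne v(2) u_def subgroup.m_closed[OF F1] by auto
          moreover have "u \<notin> F2" if "u \<noteq> \<one>" using nF2 \<open>u \<in> F1\<close> that by blast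
          ultimately show ?thesis using vs(4) eqproj pvs'c by (cases "u = \<one>") auto
        qed
        show ?thesis
        proof (cases "u = \<one>")
          case True
          show ?thesis using True prod_eq proj_eq vs' altvs' prvs'c pvs'c one2
            by (intro exI[of _ vs']) simp
        next
          case une: False
          have uin: "u \<in> F1 \<union> F2" using same u_def subgroup.m_closed[OF F1] subgroup.m_closed[OF F2] by blast
          have "alt F1 F2 (u # vs')"
          proof (cases vs')
            case Nil then show ?thesis by simp
          next
            case (Cons y r)
            have a: "\<not> (v \<in> F1 \<and> y \<in> F1) \<and> \<not> (v \<in> F2 \<and> y \<in> F2)" "alt F1 F2 (y # r)"
              using vs(2) \<open>vs = v # vs'\<close> Cons by auto
            have "\<not> (u \<in> F1 \<and> y \<in> F1) \<and> \<not> (u \<in> F2 \<and> y \<in> F2)"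
            proof (cases "w \<in> F1 \<and> v \<in> F1")
              case True
              then have "u \<in> F1" using u_def subgroup.m_closed[OF F1] by blast
              then show ?thesis using a(1) True nF2 une by blast
            next
              case False
              then have "w \<in> F2" "v \<in> F2" using same by auto
              then have "u \<in> F2" using u_def subgroup.m_closed[OF F2] by blast
              then have "u \<notin> F1" using I une by blast
              then show ?thesis using a(1) \<open>v \<in> F2\<close> by blast
            qed
            then show ?thesis using a(2) Cons by simp
          qed
          then show ?thesis using prod_eq proj_eq vs' altvs' une uin
            by (intro exI[of _ "u # vs'"]) auto
        qed
      next
        case diff: False
        have "alt F1 F2 (w # vs)" using diff vs(2) Cons by simp
        then show ?thesis using vs wne w
          by (intro exI[of _ "w # vs"]) auto
      qed
    qed
  qed
qed


lemma list_gen: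
  assumes F1: "subgroup F1 G" and F2: "subgroup F2 G"
  shows "x \<in> generate G (F1 \<union> F2) \<Longrightarrow> \<exists>ws. set ws \<subseteq> F1 \<union> F2 \<and> prodl G ws = x"
proof (induction rule: generate.induct)
  case one then show ?case by (intro exI[of _ "[]"]) simp
next
  case (incl h)
  then have "h \<in> carrier G" using subgroup.mem_carrier[OF F1] subgroup.mem_carrier[OF F2] by blast
  then show ?case using incl by (intro exI[of _ "[h]"]) simp
next
  case (inv h)
  then have hc: "h \<in> carrier G" using subgroup.mem_carrier[OF F1] subgroup.mem_carrier[OF F2] by blast
  have "inv h \<in> F1 \<union> F2" using inv subgroup.m_inv_closed[OF F1] subgroup.m_inv_closed[OF F2] by blast
  then show ?case using hc by (intro exI[of _ "[inv h]"]) simp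
next
  case (eng h1 h2)
  obtain ws1 where 1: "set ws1 \<subseteq> F1 \<union> F2" "prodl G ws1 = h1" using eng by blast
  obtain ws2 where 2: "set ws2 \<subseteq> F1 \<union> F2" "prodl G ws2 = h2" using eng by blast
  have "set ws1 \<subseteq> carrier G" "set ws2 \<subseteq> carrier G"
    using 1 2 subgroup.mem_carrier[OF F1] subgroup.mem_carrier[OF F2] by blast+
  then show ?case using 1 2 by (intro exI[of _ "ws1 @ ws2"]) (simp add: prodl_append)
qed

lemma proj_trivial:
  assumes fp: "free_product G F1 F2" and ws: "set ws \<subseteq> F1 \<union> F2" and p: "prodl G ws = \<one>"
  shows "projl G F2 ws = \<one>"
proof -
  have F1: "subgroup F1 G" and F2: "subgroup F2 G" and I: "F1 \<inter> F2 = {\<one>}"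
    using fp unfolding free_product_def by auto
  obtain vs where vs: "set vs \<subseteq> (F1 \<union> F2) - {\<one>}" "alt F1 F2 vs"
      "prodl G vs = prodl G ws" "projl G F2 vs = projl G F2 ws"
    using reduce_word[OF F1 F2 I ws] by blast
  have ax: "vs \<noteq> [] \<and> set vs \<subseteq> (F1 \<union> F2) - {\<one>} \<and>
        (\<forall>i. Suc i < length vs \<longrightarrow> \<not> (vs ! i \<in> F1 \<and> vs ! Suc i \<in> F1) \<and>
                                   \<not> (vs ! i \<in> F2 \<and> vs ! Suc i \<in> F2))
        \<longrightarrow> foldr (\<otimes>) vs \<one> \<noteq> \<one>"
    using fp unfolding free_product_def by blast
  have "foldr (\<otimes>) vs \<one> = prodl G vs" by (simp add: prodl_def)
  then have "vs = []" using ax vs p alt_nth[OF vs(2)] by auto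
  then show ?thesis using vs(4) by simp
qed

lemma fp_retraction:
  assumes fp: "free_product G F1 F2"
  shows "\<exists>\<pi>. (\<forall>x\<in>carrier G. \<pi> x \<in> F2) \<and> (\<forall>x\<in>carrier G. \<forall>y\<in>carrier G. \<pi> (x \<otimes> y) = \<pi> x \<otimes> \<pi> y)
      \<and> (\<forall>x\<in>F2. \<pi> x = x) \<and> (\<forall>x\<in>F1. \<pi> x = \<one>)"
proof -
  have F1: "subgroup F1 G" and F2: "subgroup F2 G" and I: "F1 \<inter> F2 = {\<one>}"
    and gen: "generate G (F1 \<union> F2) = carrier G"
    using fp unfolding free_product_def by auto
  have c12: "\<And>x. x \<in> F1 \<union> F2 \<Longrightarrow> x \<in> carrier G"
    using subgroup.mem_carrier[OF F1] subgroup.mem_carrier[OF F2] by blast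
  have ex: "\<And>x. x \<in> carrier G \<Longrightarrow> \<exists>ws. set ws \<subseteq> F1 \<union> F2 \<and> prodl G ws = x"
    using list_gen[OF F1 F2] gen by blast
  have wd: "projl G F2 ws = projl G F2 vs"
    if ws: "set ws \<subseteq> F1 \<union> F2" and vs: "set vs \<subseteq> F1 \<union> F2" and eq: "prodl G ws = prodl G vs" for ws vs
  proof -
    have wsc: "set ws \<subseteq> carrier G" and vsc: "set vs \<subseteq> carrier G" using ws vs c12 by blast+
    have ivs: "set (invl G vs) \<subseteq> F1 \<union> F2"
      using vs subgroup.m_inv_closed[OF F1] subgroup.m_inv_closed[OF F2] by (auto simp: set_invl)
    have ivsc: "set (invl G vs) \<subseteq> carrier G" using ivs c12 by blast
    have "prodl G (ws @ invl G vs) = \<one>"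
      using eq wsc vsc ivsc by (simp add: prodl_append prodl_invl prodl_closed)
    then have "projl G F2 (ws @ invl G vs) = \<one>"
      using proj_trivial[OF fp] ws ivs by simp
    moreover have "projl G F2 (ws @ invl G vs) = projl G F2 ws \<otimes> inv (projl G F2 vs)"
      using projl_append[OF F2 wsc] projl_invl[OF F2 vsc] by simp
    moreover have "projl G F2 ws \<in> carrier G" "projl G F2 vs \<in> carrier G"
      using projl_in[OF F2] subgroup.mem_carrier[OF F2] by blast+
    ultimately show ?thesis by (metis inv_equality inv_inv r_inv inv_closed m_assoc r_one)
  qed
  define \<pi> where "\<pi> x = projl G F2 (SOME ws. set ws \<subseteq> F1 \<union> F2 \<and> prodl G ws = x)" for x
  have pe: "\<pi> (prodl G ws) = projl G F2 ws" if ws: "set ws \<subseteq> F1 \<union> F2" for ws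
  proof -
    let ?v = "SOME vs. set vs \<subseteq> F1 \<union> F2 \<and> prodl G vs = prodl G ws"
    have "set ?v \<subseteq> F1 \<union> F2 \<and> prodl G ?v = prodl G ws"
      by (rule someI[of _ ws]) (use ws in simp)
    then show ?thesis unfolding \<pi>_def using wd[OF ws] by metis
  qed
  show ?thesis
  proof (intro exI[of _ \<pi>] conjI ballI)
    fix x assume "x \<in> carrier G"
    then obtain ws where "set ws \<subseteq> F1 \<union> F2" "prodl G ws = x" using ex by blast
    then show "\<pi> x \<in> F2" using pe projl_in[OF F2] by metis
  next
    fix x y assume x: "x \<in> carrier G" and y: "y \<in> carrier G"
    obtain ws where ws: "set ws \<subseteq> F1 \<union> F2" "prodl G ws = x" using ex x by blast
    obtain vs where vs: "set vs \<subseteq> F1 \<union> F2" "prodl G vs = y" using ex y by blast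
    have wsc: "set ws \<subseteq> carrier G" and vsc: "set vs \<subseteq> carrier G" using ws vs c12 by blast+
    have "x \<otimes> y = prodl G (ws @ vs)" using ws vs wsc vsc by (simp add: prodl_append)
    then have "\<pi> (x \<otimes> y) = projl G F2 (ws @ vs)" using pe ws(1) vs(1) by simp
    also have "\<dots> = projl G F2 ws \<otimes> projl G F2 vs" using projl_append[OF F2 wsc] .
    also have "\<dots> = \<pi> x \<otimes> \<pi> y" using pe ws vs by metis
    finally show "\<pi> (x \<otimes> y) = \<pi> x \<otimes> \<pi> y" .
  next
    fix x assume x: "x \<in> F2"
    have xc: "x \<in> carrier G" using x c12 by blast
    have "\<pi> (prodl G [x]) = projl G F2 [x]" using pe[of "[x]"] x by simp
    then show "\<pi> x = x" using x xc by simp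
  next
    fix x assume x: "x \<in> F1"
    have xc: "x \<in> carrier G" using x c12 by blast
    have "\<pi> (prodl G [x]) = projl G F2 [x]" using pe[of "[x]"] x by simp
    then show "\<pi> x = \<one>" using x xc I by auto
  qed
qed

end



locale thm_setup = group G for G (structure) +
  fixes F1 F2 R2 S
  assumes fp: "free_product G F1 F2"
    and R2sub: "subgroup R2 G" and R2F2: "R2 \<subseteq> F2"
    and R2conj: "\<And>r h. r \<in> R2 \<Longrightarrow> h \<in> F2 \<Longrightarrow> inv h \<otimes> r \<otimes> h \<in> R2"
    and Snormal: "S \<lhd> G"
    and RS: "\<And>r f. r \<in> R2 \<Longrightarrow> f \<in> F1 \<Longrightarrow> comm G r f \<in> S"
begin

lemma F1sub: "subgroup F1 G" and F2sub: "subgroup F2 G" and F12: "F1 \<inter> F2 = {\<one>}"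
  and gen12: "generate G (F1 \<union> F2) = carrier G"
  using fp unfolding free_product_def by auto

lemma F1c: "x \<in> F1 \<Longrightarrow> x \<in> carrier G" by (rule subgroup.mem_carrier[OF F1sub])
lemma F2c: "x \<in> F2 \<Longrightarrow> x \<in> carrier G" by (rule subgroup.mem_carrier[OF F2sub])
lemma R2c: "x \<in> R2 \<Longrightarrow> x \<in> carrier G" using R2F2 F2c by blast
lemma Ssub: "subgroup S G" by (rule normal_imp_subgroup[OF Snormal])
lemma Sc: "x \<in> S \<Longrightarrow> x \<in> carrier G" by (rule subgroup.mem_carrier[OF Ssub])
lemma F12c: "F1 \<union> F2 \<subseteq> carrier G" using F1c F2c by blast

lemma normal_by_F12:
  assumes H: "subgroup H G" and cl: "\<And>x h. x \<in> F1 \<union> F2 \<Longrightarrow> h \<in> H \<Longrightarrow> inv x \<otimes> h \<otimes> x \<in> H"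
  shows "H \<lhd> G"
proof (rule normal_by_gens[OF H F12c gen12])
  fix x assume "x \<in> F1 \<union> F2" then show "inv x \<in> F1 \<union> F2"
    using subgroup.m_inv_closed[OF F1sub] subgroup.m_inv_closed[OF F2sub] by blast
qed (rule cl)

lemma all_by_F12:
  assumes H: "subgroup H G" and "F1 \<union> F2 \<subseteq> H" shows "carrier G \<subseteq> H"
  using generate_subgroup_incl[OF assms(2) H] gen12 by simp

lemma RS_normal: "R2 <#> S \<lhd> G"
proof (rule normal_by_F12[OF subgroup_mult_normal[OF R2sub Snormal]])
  fix x h assume x: "x \<in> F1 \<union> F2" and h: "h \<in> R2 <#> S"
  obtain r s where rs: "r \<in> R2" "s \<in> S" "h = r \<otimes> s" using h unfolding set_mult_def by blast
  have xc: "x \<in> carrier G" using x F12c by blast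
  have rc: "r \<in> carrier G" using R2c rs by blast
  have sc: "s \<in> carrier G" using Sc rs by blast
  have e: "inv x \<otimes> h \<otimes> x = (inv x \<otimes> r \<otimes> x) \<otimes> (inv x \<otimes> s \<otimes> x)"
    using xc rc sc rs by (simp add: m_assoc)
  have s': "inv x \<otimes> s \<otimes> x \<in> S" by (rule normal_conj[OF Snormal xc rs(2)])
  show "inv x \<otimes> h \<otimes> x \<in> R2 <#> S"
  proof (cases "x \<in> F2")
    case True
    then show ?thesis unfolding e by (intro set_mult_memI R2conj rs(1) s')
  next
    case False
    then have x1: "x \<in> F1" using x by blast
    have "inv x \<otimes> h \<otimes> x = r \<otimes> (comm G r x \<otimes> (inv x \<otimes> s \<otimes> x))"
      unfolding e using conj_eq_comm[OF rc xc] rc xc sc by (simp add: m_assoc)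
    also have "\<dots> \<in> R2 <#> S"
      by (intro set_mult_memI rs(1) subgroup.m_closed[OF Ssub] RS[OF rs(1) x1] s')
    finally show ?thesis .
  qed
qed

definition Pgen :: "nat \<Rightarrow> 'a set" where
  "Pgen c = {lcomm G r fs | r fs. r \<in> R2 \<and> length fs = c \<and> set fs \<subseteq> F1 \<union> F2 \<and> (\<exists>f \<in> set fs. f \<in> F1)}"
definition P :: "nat \<Rightarrow> 'a set" where "P c = normal_closure G (Pgen c)"
definition B :: "nat \<Rightarrow> 'a set" where
  "B c = {lcomm G r gs | r gs. r \<in> R2 \<and> length gs = c \<and> set gs \<subseteq> F2}"
abbreviation L :: "nat \<Rightarrow> 'a set" where "L c \<equiv> citer G R2 F2 c"

lemma Pgen_c: "Pgen c \<subseteq> carrier G"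
  unfolding Pgen_def using lcomm_closed R2c F12c by blast

lemma P_normal: "P c \<lhd> G" unfolding P_def by (rule nc_normal[OF Pgen_c])
lemma P_sub: "subgroup (P c) G" by (rule normal_imp_subgroup[OF P_normal])
lemma P_one: "\<one> \<in> P c" by (rule subgroup.one_closed[OF P_sub])
lemma P_c: "x \<in> P c \<Longrightarrow> x \<in> carrier G" by (rule subgroup.mem_carrier[OF P_sub])
lemma P_gen: "r \<in> R2 \<Longrightarrow> length fs = c \<Longrightarrow> set fs \<subseteq> F1 \<union> F2 \<Longrightarrow> f \<in> set fs \<Longrightarrow> f \<in> F1 \<Longrightarrow> lcomm G r fs \<in> P c"
  unfolding P_def by (rule nc_incl[OF Pgen_c]) (auto simp: Pgen_def)

lemma lcomm_in_sub: "subgroup H G \<Longrightarrow> x \<in> H \<Longrightarrow> set fs \<subseteq> H \<Longrightarrow> lcomm G x fs \<in> H"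
proof (induction fs rule: rev_induct)
  case (snoc f fs)
  have "lcomm G x fs \<in> H" "f \<in> H" using snoc by auto
  then show ?case unfolding lcomm_snoc comm_def
    using snoc(2) by (intro subgroup.m_closed subgroup.m_inv_closed) auto
qed simp

lemma B_F2: "B c \<subseteq> F2"
  unfolding B_def using lcomm_in_sub[OF F2sub] R2F2 by blast

lemma B_conj: assumes b: "b \<in> B c" and h: "h \<in> F2" shows "inv h \<otimes> b \<otimes> h \<in> B c"
proof -
  obtain r gs where rg: "b = lcomm G r gs" "r \<in> R2" "length gs = c" "set gs \<subseteq> F2"
    using b unfolding B_def by blast
  have hc: "h \<in> carrier G" using F2c h by blast
  have "inv h \<otimes> b \<otimes> h = lcomm G (inv h \<otimes> r \<otimes> h) (map (\<lambda>f. inv h \<otimes> f \<otimes> h) gs)"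
    using lcomm_conj[OF hc R2c[OF rg(2)]] rg F2c by blast
  moreover have "set (map (\<lambda>f. inv h \<otimes> f \<otimes> h) gs) \<subseteq> F2"
    using rg(4) h by (auto intro!: subgroup.m_closed[OF F2sub] subgroup.m_inv_closed[OF F2sub])
  ultimately show ?thesis unfolding B_def using R2conj[OF rg(2) h] rg(3) by fastforce
qed

lemma generate_conj_closed:
  assumes Z: "Z \<subseteq> carrier G" and h: "h \<in> carrier G"
    and cl: "\<And>z. z \<in> Z \<Longrightarrow> inv h \<otimes> z \<otimes> h \<in> generate G Z"
  shows "y \<in> generate G Z \<Longrightarrow> inv h \<otimes> y \<otimes> h \<in> generate G Z"
proof (induction rule: generate.induct)
  case one then show ?case using h by (simp add: generate.one)
next
  case (incl z) then show ?case by (rule cl)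
next
  case (inv z)
  have zc: "z \<in> carrier G" using inv Z by blast
  have "inv h \<otimes> inv z \<otimes> h = inv (inv h \<otimes> z \<otimes> h)" using zc h by (simp add: inv_mult_group m_assoc)
  then show ?case using generate_m_inv_closed[OF Z cl[OF inv]] by simp
next
  case (eng a b)
  have ac: "a \<in> carrier G" and bc: "b \<in> carrier G" using eng generate_in_carrier[OF Z] by auto
  have "inv h \<otimes> (a \<otimes> b) \<otimes> h = (inv h \<otimes> a \<otimes> h) \<otimes> (inv h \<otimes> b \<otimes> h)"
    using ac bc h by (simp add: m_assoc)
  then show ?case using generate.eng[OF eng(3,4)] by simp
qed

lemma genB_conj: assumes "y \<in> generate G (B c)" "h \<in> F2" shows "inv h \<otimes> y \<otimes> h \<in> generate G (B c)"
proof (rule generate_conj_closed[of "B c" h y])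
  show "B c \<subseteq> carrier G" using B_F2 F2c by blast
  show "h \<in> carrier G" by (rule F2c[OF assms(2)])
  show "\<And>z. z \<in> B c \<Longrightarrow> inv h \<otimes> z \<otimes> h \<in> generate G (B c)"
    by (rule generate.incl, rule B_conj[OF _ assms(2)])
qed (rule assms(1))

lemma genB_sub: "subgroup (generate G (B c)) G"
  by (rule generate_is_subgroup) (use B_F2 F2c in blast)

lemma L_sub_F2: "L c \<subseteq> F2"
proof (induction c)
  case 0 then show ?case using R2F2 by simp
next
  case (Suc c)
  have "comm_subgroup G (L c) F2 \<subseteq> F2"
  proof (rule comm_subgroup_sub[OF F2sub])
    fix h k assume "h \<in> L c" "k \<in> F2"
    then show "comm G h k \<in> F2" using Suc unfolding comm_def
      by (intro subgroup.m_closed[OF F2sub] subgroup.m_inv_closed[OF F2sub]) auto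
  qed
  then show ?case by simp
qed

lemma L_subgroup: "subgroup (L c) G"
proof (cases c)
  case 0 then show ?thesis using R2sub by simp
next
  case (Suc n) then show ?thesis using citer_subgroup[of R2 F2 c] R2F2 F2c by blast
qed

lemma L_c: "x \<in> L c \<Longrightarrow> x \<in> carrier G" by (rule subgroup.mem_carrier[OF L_subgroup])

lemma L_in_genB: "L c \<subseteq> generate G (B c)"
proof (induction c)
  case 0
  have "R2 \<subseteq> generate G R2" by (auto intro: generate.incl)
  moreover have "B 0 = R2" unfolding B_def by auto
  ultimately show ?case by simp
next
  case (Suc c)
  let ?Q = "generate G (B (Suc c))"
  define Y where "Y = {y \<in> carrier G. \<forall>g\<in>F2. comm G y g \<in> ?Q}"
  have Qn: "\<And>q h. q \<in> ?Q \<Longrightarrow> h \<in> F2 \<Longrightarrow> inv h \<otimes> q \<otimes> h \<in> ?Q" using genB_conj by blast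
  have Qs: "subgroup ?Q G" by (rule genB_sub)
  have "subgroup (Y \<inter> F2) G"
  proof (rule subgroupI)
    show "Y \<inter> F2 \<subseteq> carrier G" unfolding Y_def by blast
    have "\<one> \<in> Y \<inter> F2" unfolding Y_def
      using F2c subgroup.one_closed[OF Qs] subgroup.one_closed[OF F2sub] by simp
    then show "Y \<inter> F2 \<noteq> {}" by blast
  next
    fix a assume a: "a \<in> Y \<inter> F2"
    have ac: "a \<in> carrier G" and aF: "a \<in> F2" using a unfolding Y_def by auto
    have ia: "inv a \<in> F2" using aF subgroup.m_inv_closed[OF F2sub] by blast
    have "comm G (inv a) g \<in> ?Q" if g: "g \<in> F2" for g
    proof -
      have gc: "g \<in> carrier G" using F2c[OF g] .
      have q: "comm G a g \<in> ?Q" using a g unfolding Y_def by simp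
      have "comm G (inv a) g = inv (inv a) \<otimes> inv (comm G a g) \<otimes> inv a"
        using comm_inv_left[OF ac gc] ac by simp
      then show ?thesis using Qn[OF subgroup.m_inv_closed[OF Qs q] ia] by simp
    qed
    then show "inv a \<in> Y \<inter> F2" unfolding Y_def using ac ia by simp
  next
    fix a b assume a: "a \<in> Y \<inter> F2" and b: "b \<in> Y \<inter> F2"
    have ac: "a \<in> carrier G" and aF: "a \<in> F2" using a unfolding Y_def by auto
    have bc: "b \<in> carrier G" and bF: "b \<in> F2" using b unfolding Y_def by auto
    have "comm G (a \<otimes> b) g \<in> ?Q" if g: "g \<in> F2" for g
    proof -
      have gc: "g \<in> carrier G" using F2c[OF g] .
      have qa: "comm G a g \<in> ?Q" using a g unfolding Y_def by simp
      have qb: "comm G b g \<in> ?Q" using b g unfolding Y_def by simp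
      have "comm G (a \<otimes> b) g = (inv b \<otimes> comm G a g \<otimes> b) \<otimes> comm G b g"
        using comm_mult_left[OF ac bc gc] .
      then show ?thesis using subgroup.m_closed[OF Qs Qn[OF qa bF] qb] by simp
    qed
    then show "a \<otimes> b \<in> Y \<inter> F2" unfolding Y_def
      using ac bc aF bF subgroup.m_closed[OF F2sub] by simp
  qed
  moreover have "B c \<subseteq> Y \<inter> F2"
  proof
    fix b assume b: "b \<in> B c"
    obtain r gs where rg: "b = lcomm G r gs" "r \<in> R2" "length gs = c" "set gs \<subseteq> F2"
      using b unfolding B_def by blast
    have "comm G b g \<in> ?Q" if g: "g \<in> F2" for g
    proof -
      have "comm G b g = lcomm G r (gs @ [g])" using rg by simp
      moreover have "lcomm G r (gs @ [g]) \<in> B (Suc c)" unfolding B_def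
        using rg g by (intro CollectI exI[of _ r] exI[of _ "gs @ [g]"]) auto
      ultimately show ?thesis by (simp add: generate.incl)
    qed
    moreover have "b \<in> F2" using b B_F2 by blast
    ultimately show "b \<in> Y \<inter> F2" unfolding Y_def using F2c by simp
  qed
  ultimately have "generate G (B c) \<subseteq> Y \<inter> F2" by (rule generate_subgroup_incl[rotated])
  then have LY: "L c \<subseteq> Y" using Suc by (meson Int_subset_iff subset_trans)
  have "comm_subgroup G (L c) F2 \<subseteq> ?Q"
  proof (rule comm_subgroup_sub[OF Qs])
    fix h k assume "h \<in> L c" "k \<in> F2" then show "comm G h k \<in> ?Q" using LY unfolding Y_def by auto
  qed
  then show ?case by simp
qed


lemma L_F1_comm: assumes y: "y \<in> L c" and f: "f \<in> F1" shows "comm G y f \<in> P (Suc c)"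
proof -
  define C where "C = {y \<in> carrier G. \<forall>f\<in>F1. comm G y f \<in> P (Suc c)}"
  have Cs: "subgroup C G" unfolding C_def by (rule left_comm_subgroup[OF P_normal]) (use F1c in blast)
  have "B c \<subseteq> C"
  proof
    fix b assume b: "b \<in> B c"
    obtain r gs where rg: "b = lcomm G r gs" "r \<in> R2" "length gs = c" "set gs \<subseteq> F2"
      using b unfolding B_def by blast
    have bc: "b \<in> carrier G" using b B_F2 F2c by blast
    have "comm G b f' \<in> P (Suc c)" if f': "f' \<in> F1" for f'
    proof -
      have "comm G b f' = lcomm G r (gs @ [f'])" using rg by simp
      moreover have "lcomm G r (gs @ [f']) \<in> P (Suc c)"
        by (rule P_gen[OF rg(2), of _ _ f']) (use rg f' in auto)
      ultimately show ?thesis by simp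
    qed
    then show "b \<in> C" unfolding C_def using bc by simp
  qed
  then have "generate G (B c) \<subseteq> C" by (rule generate_subgroup_incl[OF _ Cs])
  then have "y \<in> C" using L_in_genB y by blast
  then show ?thesis unfolding C_def using f by simp
qed

lemma L_conj: "y \<in> L c \<Longrightarrow> k \<in> F2 \<Longrightarrow> inv k \<otimes> y \<otimes> k \<in> L c"
proof (induction c arbitrary: y k)
  case 0 then show ?case using R2conj by simp
next
  case (Suc n)
  have kc: "k \<in> carrier G" using F2c[OF Suc(3)] .
  have sub: "{comm G h k |h k. h \<in> L n \<and> k \<in> F2} \<subseteq> carrier G"
  proof
    fix z assume "z \<in> {comm G h k |h k. h \<in> L n \<and> k \<in> F2}"
    then obtain a b where "z = comm G a b" "a \<in> L n" "b \<in> F2" by blast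
    then show "z \<in> carrier G" using L_c F2c by simp
  qed
  have "inv k \<otimes> y \<otimes> k \<in> generate G {comm G h k |h k. h \<in> L n \<and> k \<in> F2}"
  proof (rule generate_conj_closed[OF sub kc])
    show "y \<in> generate G {comm G h k |h k. h \<in> L n \<and> k \<in> F2}"
      using Suc(2) by (simp add: comm_subgroup_def)
  next
    fix z assume "z \<in> {comm G h k |h k. h \<in> L n \<and> k \<in> F2}"
    then obtain a b where ab: "z = comm G a b" "a \<in> L n" "b \<in> F2" by blast
    have ac: "a \<in> carrier G" using L_c[OF ab(2)] .
    have bc: "b \<in> carrier G" using F2c[OF ab(3)] .
    have "inv k \<otimes> z \<otimes> k = comm G (inv k \<otimes> a \<otimes> k) (inv k \<otimes> b \<otimes> k)"
      using comm_conj[OF ac bc kc] ab by simp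
    moreover have "inv k \<otimes> a \<otimes> k \<in> L n" by (rule Suc.IH[OF ab(2) Suc(3)])
    moreover have "inv k \<otimes> b \<otimes> k \<in> F2"
      using ab(3) Suc(3) by (intro subgroup.m_closed[OF F2sub] subgroup.m_inv_closed[OF F2sub])
    ultimately show "inv k \<otimes> z \<otimes> k \<in> generate G {comm G h k |h k. h \<in> L n \<and> k \<in> F2}"
      by (intro generate.incl) blast
  qed
  then show ?case by (simp add: comm_subgroup_def)
qed

lemma L_Suc_sub: "L (Suc c) \<subseteq> L c"
proof -
  have "comm_subgroup G (L c) F2 \<subseteq> L c"
  proof (rule comm_subgroup_sub[OF L_subgroup])
    fix h k assume h: "h \<in> L c" and k: "k \<in> F2"
    have hc: "h \<in> carrier G" using L_c[OF h] .
    have kc: "k \<in> carrier G" using F2c[OF k] .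
    have e: "comm G h k = inv h \<otimes> (inv k \<otimes> h \<otimes> k)" using hc kc by (simp add: comm_def m_assoc)
    show "comm G h k \<in> L c" unfolding e
      by (intro subgroup.m_closed[OF L_subgroup] subgroup.m_inv_closed[OF L_subgroup] h L_conj k)
  qed
  then show ?thesis by simp
qed


abbreviation M :: "nat \<Rightarrow> 'a set" where "M c \<equiv> L c <#> P c"

lemma M_sub: "subgroup (M c) G" by (rule subgroup_mult_normal[OF L_subgroup P_normal])

lemma L_in_M: "x \<in> L c \<Longrightarrow> x \<in> M c"
  using set_mult_memI[OF _ P_one, of x "L c" c] L_c by simp

lemma P_in_M: "x \<in> P c \<Longrightarrow> x \<in> M c"
  using set_mult_memI[OF subgroup.one_closed[OF L_subgroup], of x "P c" c] P_c by simp

lemma M_normal: "M (Suc n) \<lhd> G"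
proof (rule normal_by_F12[OF M_sub])
  fix x m assume x: "x \<in> F1 \<union> F2" and m: "m \<in> M (Suc n)"
  obtain l p where lp: "l \<in> L (Suc n)" "p \<in> P (Suc n)" "m = l \<otimes> p" using m unfolding set_mult_def by blast
  have xc: "x \<in> carrier G" using x F12c by blast
  have lc: "l \<in> carrier G" using L_c[OF lp(1)] .
  have pc: "p \<in> carrier G" using P_c[OF lp(2)] .
  have e: "inv x \<otimes> m \<otimes> x = (inv x \<otimes> l \<otimes> x) \<otimes> (inv x \<otimes> p \<otimes> x)"
    using xc lc pc lp by (simp add: m_assoc)
  have p': "inv x \<otimes> p \<otimes> x \<in> P (Suc n)" by (rule normal_conj[OF P_normal xc lp(2)])
  show "inv x \<otimes> m \<otimes> x \<in> M (Suc n)"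
  proof (cases "x \<in> F2")
    case True
    then show ?thesis unfolding e by (intro set_mult_memI L_conj lp(1) p')
  next
    case False
    then have x1: "x \<in> F1" using x by blast
    have "l \<in> L n" using L_Suc_sub lp(1) by blast
    then have cl: "comm G l x \<in> P (Suc n)" by (rule L_F1_comm[OF _ x1])
    have "inv x \<otimes> m \<otimes> x = l \<otimes> (comm G l x \<otimes> (inv x \<otimes> p \<otimes> x))"
      unfolding e using conj_eq_comm[OF lc xc] lc xc pc by (simp add: m_assoc)
    also have "\<dots> \<in> M (Suc n)"
      by (intro set_mult_memI lp(1) subgroup.m_closed[OF P_sub] cl p')
    finally show ?thesis .
  qed
qed

lemma L_comm_M: assumes y: "y \<in> L c" and f: "f \<in> carrier G" shows "comm G y f \<in> M (Suc c)"
proof -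
  have yc: "y \<in> carrier G" using L_c[OF y] .
  have "carrier G \<subseteq> {f \<in> carrier G. comm G y f \<in> M (Suc c)}"
  proof (rule all_by_F12[OF right_comm_subgroup[OF M_normal yc]])
    show "F1 \<union> F2 \<subseteq> {f \<in> carrier G. comm G y f \<in> M (Suc c)}"
    proof
      fix g assume g: "g \<in> F1 \<union> F2"
      have gc: "g \<in> carrier G" using g F12c by blast
      show "g \<in> {f \<in> carrier G. comm G y f \<in> M (Suc c)}"
      proof (cases "g \<in> F1")
        case True
        then show ?thesis using gc P_in_M[OF L_F1_comm[OF y True]] by simp
      next
        case False
        then have "g \<in> F2" using g by blast
        then have cL: "comm G y g \<in> L (Suc c)" using y by (simp add: comm_subgroup_incl)
        show ?thesis using gc L_in_M[OF cL] by simp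
      qed
    qed
  qed
  then show ?thesis using f by blast
qed

lemma P_comm: assumes x: "x \<in> P c" and f: "f \<in> carrier G" shows "comm G x f \<in> P (Suc c)"
proof -
  define C where "C = {y \<in> carrier G. \<forall>f\<in>carrier G. comm G y f \<in> P (Suc c)}"
  have Cs: "subgroup C G" unfolding C_def by (rule left_comm_subgroup[OF P_normal]) simp
  have "P c \<subseteq> C" unfolding P_def
  proof (rule nc_closure_set[OF Cs])
    fix g y assume g: "g \<in> carrier G" and y: "y \<in> C"
    then show "inv g \<otimes> y \<otimes> g \<in> C" unfolding C_def
      using left_comm_conj[OF P_normal] by simp
  next
    show "Pgen c \<subseteq> C"
    proof
      fix u assume u: "u \<in> Pgen c"
      obtain r fs f0 where rf: "u = lcomm G r fs" "r \<in> R2" "length fs = c" "set fs \<subseteq> F1 \<union> F2"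
          "f0 \<in> set fs" "f0 \<in> F1"
        using u unfolding Pgen_def by blast
      have uc: "u \<in> carrier G" using u Pgen_c by blast
      have "carrier G \<subseteq> {f \<in> carrier G. comm G u f \<in> P (Suc c)}"
      proof (rule all_by_F12[OF right_comm_subgroup[OF P_normal uc]])
        show "F1 \<union> F2 \<subseteq> {f \<in> carrier G. comm G u f \<in> P (Suc c)}"
        proof
          fix g assume g: "g \<in> F1 \<union> F2"
          have gc: "g \<in> carrier G" using g F12c by blast
          have "comm G u g = lcomm G r (fs @ [g])" using rf by simp
          moreover have "lcomm G r (fs @ [g]) \<in> P (Suc c)"
            by (rule P_gen[OF rf(2), of _ _ f0]) (use rf g in auto)
          ultimately show "g \<in> {f \<in> carrier G. comm G u f \<in> P (Suc c)}" using gc by simp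
        qed
      qed
      then show "u \<in> C" unfolding C_def using uc by blast
    qed
  qed
  then show ?thesis using x f unfolding C_def by blast
qed

lemma K_sub: "citer G R2 (carrier G) c \<subseteq> M c"
proof (induction c)
  case 0
  show ?case
  proof
    fix x assume "x \<in> citer G R2 (carrier G) 0"
    then show "x \<in> M 0" using L_in_M[of x 0] by simp
  qed
next
  case (Suc c)
  have "comm_subgroup G (citer G R2 (carrier G) c) (carrier G) \<subseteq> M (Suc c)"
  proof (rule comm_subgroup_sub[OF M_sub])
    fix x f assume x: "x \<in> citer G R2 (carrier G) c" and f: "f \<in> carrier G"
    obtain l p where lp: "l \<in> L c" "p \<in> P c" "x = l \<otimes> p" using x Suc unfolding set_mult_def by blast
    have lc: "l \<in> carrier G" using L_c[OF lp(1)] .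
    have pc: "p \<in> carrier G" using P_c[OF lp(2)] .
    have e: "comm G x f = (inv p \<otimes> comm G l f \<otimes> p) \<otimes> comm G p f"
      using comm_mult_left[OF lc pc f] lp by simp
    have h1: "inv p \<otimes> comm G l f \<otimes> p \<in> M (Suc c)"
      by (rule normal_conj[OF M_normal pc L_comm_M[OF lp(1) f]])
    have h2: "comm G p f \<in> M (Suc c)" by (rule P_in_M[OF P_comm[OF lp(2) f]])
    show "comm G x f \<in> M (Suc c)" unfolding e by (rule subgroup.m_closed[OF M_sub h1 h2])
  qed
  then show ?case by simp
qed


abbreviation T :: "nat \<Rightarrow> 'a set" where "T c \<equiv> citer G S (carrier G) c"
abbreviation K :: "nat \<Rightarrow> 'a set" where "K c \<equiv> citer G R2 (carrier G) c"

lemma T_normal: "T c \<lhd> G" by (rule citer_normal[OF Snormal])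

lemma K_sub_grp: "subgroup (K c) G"
proof (cases c)
  case 0 then show ?thesis using R2sub by simp
next
  case (Suc n) then show ?thesis using citer_subgroup[of R2 "carrier G" c] R2c by blast
qed

lemma RSc: "R2 <#> S \<subseteq> carrier G" using R2c Sc by (auto simp: set_mult_def)

lemma RS_citer_sub: "citer G (R2 <#> S) (carrier G) c \<subseteq> K c <#> T c"
proof (induction c)
  case 0 then show ?case by simp
next
  case (Suc c)
  have Qs: "subgroup (K (Suc c) <#> T (Suc c)) G" by (rule subgroup_mult_normal[OF K_sub_grp T_normal])
  have "comm_subgroup G (citer G (R2 <#> S) (carrier G) c) (carrier G) \<subseteq> K (Suc c) <#> T (Suc c)"
  proof (rule comm_subgroup_sub[OF Qs])
    fix x f assume x: "x \<in> citer G (R2 <#> S) (carrier G) c" and f: "f \<in> carrier G"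
    obtain k t where kt: "k \<in> K c" "t \<in> T c" "x = k \<otimes> t" using x Suc unfolding set_mult_def by blast
    have kc: "k \<in> carrier G" using subgroup.mem_carrier[OF K_sub_grp kt(1)] .
    have tc: "t \<in> carrier G" using subgroup.mem_carrier[OF normal_imp_subgroup[OF T_normal] kt(2)] .
    define a where "a = comm G k f"
    have ac: "a \<in> carrier G" using a_def kc f by simp
    have e: "comm G x f = a \<otimes> (comm G a t \<otimes> comm G t f)"
      using comm_mult_left[OF kc tc f] conj_eq_comm[OF ac tc] kt ac tc f unfolding a_def[symmetric]
      by (simp add: m_assoc)
    have aK: "a \<in> K (Suc c)" unfolding a_def using kt(1) f by (simp add: comm_subgroup_incl)
    have "comm G t a \<in> T (Suc c)" using kt(2) ac by (simp add: comm_subgroup_incl)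
    then have "inv (comm G t a) \<in> T (Suc c)"
      by (rule subgroup.m_inv_closed[OF normal_imp_subgroup[OF T_normal]])
    then have h1: "comm G a t \<in> T (Suc c)" using inv_comm_eq[OF tc ac] by simp
    have h2: "comm G t f \<in> T (Suc c)" using kt(2) f by (simp add: comm_subgroup_incl)
    show "comm G x f \<in> K (Suc c) <#> T (Suc c)" unfolding e
      by (rule set_mult_memI[OF aK subgroup.m_closed[OF normal_imp_subgroup[OF T_normal] h1 h2]])
  qed
  then show ?case by simp
qed

lemma part4: "citer G (R2 <#> S) (carrier G) (Suc n) = L (Suc n) <#> P (Suc n) <#> T (Suc n)"
proof
  show "citer G (R2 <#> S) (carrier G) (Suc n) \<subseteq> L (Suc n) <#> P (Suc n) <#> T (Suc n)"
    using RS_citer_sub[of "Suc n"] mono_set_mult[OF K_sub[of "Suc n"] subset_refl[of "T (Suc n)"], of G] by blast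
next
  let ?Q = "citer G (R2 <#> S) (carrier G) (Suc n)"
  have Qn: "?Q \<lhd> G" by (rule citer_normal[OF RS_normal])
  have Qs: "subgroup ?Q G" by (rule normal_imp_subgroup[OF Qn])
  have R2RS: "R2 \<subseteq> R2 <#> S" using set_mult_memI[OF _ subgroup.one_closed[OF Ssub], of _ R2] R2c by fastforce
  have SRS: "S \<subseteq> R2 <#> S" using set_mult_memI[OF subgroup.one_closed[OF R2sub], of _ S] Sc by fastforce
  have "L (Suc n) \<subseteq> ?Q" by (rule citer_mono[OF R2RS]) (use F2c in blast)
  moreover have "P (Suc n) \<subseteq> ?Q" unfolding P_def
  proof (rule nc_min[OF Qn])
    show "Pgen (Suc n) \<subseteq> ?Q"
    proof
      fix u assume u: "u \<in> Pgen (Suc n)"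
      obtain r fs where rf: "u = lcomm G r fs" "r \<in> R2" "length fs = Suc n" "set fs \<subseteq> F1 \<union> F2"
        using u unfolding Pgen_def by blast
      have "lcomm G r fs \<in> citer G (R2 <#> S) (carrier G) (length fs)"
        by (rule lcomm_in_citer) (use rf R2RS F12c in auto)
      then show "u \<in> ?Q" using rf by simp
    qed
  qed
  moreover have "T (Suc n) \<subseteq> ?Q" by (rule citer_mono[OF SRS]) simp
  ultimately show "L (Suc n) <#> P (Suc n) <#> T (Suc n) \<subseteq> ?Q"
    by (intro set_mult_sub_subgroup[OF Qs])
qed


lemma part3:
  fixes \<pi> :: "'a \<Rightarrow> 'a"
  assumes \<pi>F2: "\<And>x. x \<in> carrier G \<Longrightarrow> \<pi> x \<in> F2"
    and \<pi>m: "\<And>x y. x \<in> carrier G \<Longrightarrow> y \<in> carrier G \<Longrightarrow> \<pi> (x \<otimes> y) = \<pi> x \<otimes> \<pi> y"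
    and \<pi>id: "\<And>x. x \<in> F2 \<Longrightarrow> \<pi> x = x"
    and \<pi>S: "\<And>s. s \<in> S \<Longrightarrow> \<pi> s = \<one>"
  shows "(R2 <#> S) \<inter> citer G (carrier G) (carrier G) c =
         (R2 \<inter> citer G F2 F2 c) <#> (S \<inter> citer G (carrier G) (carrier G) c)"
proof -
  have \<pi>c: "\<And>x. x \<in> carrier G \<Longrightarrow> \<pi> x \<in> carrier G" using \<pi>F2 F2c by blast
  have \<pi>1: "\<pi> \<one> = \<one>"
  proof -
    have "\<pi> \<one> = \<pi> \<one> \<otimes> \<pi> \<one>" using \<pi>m[of \<one> \<one>] by simp
    then show ?thesis using \<pi>c[of \<one>] by (metis one_closed r_one l_cancel)
  qed
  have \<pi>inv: "\<pi> (inv x) = inv (\<pi> x)" if x: "x \<in> carrier G" for x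
  proof -
    have "\<pi> (inv x) \<otimes> \<pi> x = \<one>" using \<pi>m[of "inv x" x] x \<pi>1 by simp
    then show ?thesis using \<pi>c x by (simp add: inv_char inv_equality)
  qed
  have \<pi>comm: "\<pi> (comm G x y) = comm G (\<pi> x) (\<pi> y)" if "x \<in> carrier G" "y \<in> carrier G" for x y
    using that by (simp add: comm_def \<pi>m \<pi>inv)
  have sgF2: "subgroup (citer G F2 F2 n) G" for n
  proof (cases n)
    case 0 then show ?thesis using F2sub by simp
  next
    case (Suc m) then show ?thesis using citer_subgroup[of F2 F2 n] F2c by blast
  qed
  have sgG: "subgroup (citer G (carrier G) (carrier G) n) G" for n
  proof (cases n)
    case 0 then show ?thesis using subgroup_self by simp
  next
    case (Suc m) then show ?thesis using citer_subgroup[of "carrier G" "carrier G" n] by blast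
  qed
  have F2G: "citer G F2 F2 n \<subseteq> citer G (carrier G) (carrier G) n" for n
    by (rule citer_mono) (use F2c in blast)+
  have proj: "x \<in> citer G (carrier G) (carrier G) n \<Longrightarrow> \<pi> x \<in> citer G F2 F2 n" for x n
  proof (induction n arbitrary: x)
    case 0 then show ?case using \<pi>F2 by simp
  next
    case (Suc n)
    note citer.simps(2) [simp del]
    define Q where "Q = {x \<in> carrier G. \<pi> x \<in> citer G F2 F2 (Suc n)}"
    have Qs: "subgroup Q G"
    proof (rule subgroupI)
      show "Q \<subseteq> carrier G" unfolding Q_def by blast
      have "\<one> \<in> Q" unfolding Q_def using \<pi>1 subgroup.one_closed[OF sgF2] by simp
      then show "Q \<noteq> {}" by blast
    next
      fix a assume "a \<in> Q" then show "inv a \<in> Q" unfolding Q_def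
        using \<pi>inv subgroup.m_inv_closed[OF sgF2] by simp
    next
      fix a b assume "a \<in> Q" "b \<in> Q" then show "a \<otimes> b \<in> Q" unfolding Q_def
        using \<pi>m subgroup.m_closed[OF sgF2] by simp
    qed
    have "comm_subgroup G (citer G (carrier G) (carrier G) n) (carrier G) \<subseteq> Q"
    proof (rule comm_subgroup_sub[OF Qs])
      fix h k assume h: "h \<in> citer G (carrier G) (carrier G) n" and k: "k \<in> carrier G"
      have hc: "h \<in> carrier G" using subgroup.mem_carrier[OF sgG h] .
      have "\<pi> (comm G h k) = comm G (\<pi> h) (\<pi> k)" using \<pi>comm[OF hc k] .
      moreover have "comm G (\<pi> h) (\<pi> k) \<in> citer G F2 F2 (Suc n)"
        using Suc.IH[OF h] \<pi>F2[OF k] by (simp add: comm_subgroup_incl citer.simps(2))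
      ultimately show "comm G h k \<in> Q" unfolding Q_def using hc k by simp
    qed
    then show ?case using Suc.prems unfolding Q_def by (auto simp: citer.simps(2))
  qed
  show ?thesis
  proof
    show "(R2 <#> S) \<inter> citer G (carrier G) (carrier G) c \<subseteq>
          (R2 \<inter> citer G F2 F2 c) <#> (S \<inter> citer G (carrier G) (carrier G) c)"
    proof
      fix x assume x: "x \<in> (R2 <#> S) \<inter> citer G (carrier G) (carrier G) c"
      obtain r s where rs: "r \<in> R2" "s \<in> S" "x = r \<otimes> s" using x unfolding set_mult_def by blast
      have rc: "r \<in> carrier G" using R2c[OF rs(1)] .
      have sc: "s \<in> carrier G" using Sc[OF rs(2)] .
      have "\<pi> x = r" using \<pi>m[OF rc sc] \<pi>id[of r] rs R2F2 \<pi>S rc by auto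
      then have r1: "r \<in> citer G F2 F2 c" using proj[of x c] x by simp
      then have r2: "r \<in> citer G (carrier G) (carrier G) c" using F2G by blast
      have "s = inv r \<otimes> x" using rs rc sc by simp
      then have "s \<in> citer G (carrier G) (carrier G) c"
        using subgroup.m_closed[OF sgG subgroup.m_inv_closed[OF sgG r2]] x by simp
      then show "x \<in> (R2 \<inter> citer G F2 F2 c) <#> (S \<inter> citer G (carrier G) (carrier G) c)"
        using rs r1 by (simp add: set_mult_memI)
    qed
  next
    show "(R2 \<inter> citer G F2 F2 c) <#> (S \<inter> citer G (carrier G) (carrier G) c) \<subseteq>
          (R2 <#> S) \<inter> citer G (carrier G) (carrier G) c"
    proof
      fix x assume "x \<in> (R2 \<inter> citer G F2 F2 c) <#> (S \<inter> citer G (carrier G) (carrier G) c)"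
      then obtain r s where rs: "r \<in> R2" "r \<in> citer G F2 F2 c" "s \<in> S"
        "s \<in> citer G (carrier G) (carrier G) c" "x = r \<otimes> s" unfolding set_mult_def by blast
      have "r \<in> citer G (carrier G) (carrier G) c" using rs(2) F2G by blast
      then have "x \<in> citer G (carrier G) (carrier G) c"
        using subgroup.m_closed[OF sgG _ rs(4)] rs(5) by simp
      then show "x \<in> (R2 <#> S) \<inter> citer G (carrier G) (carrier G) c"
        using rs by (simp add: set_mult_memI)
    qed
  qed
qed

end



lemma (in group) citer_in_sub:
  assumes H: "subgroup H G" and Z: "Z \<subseteq> H" shows "citer G Z H n \<subseteq> H"
proof (induction n)
  case 0 then show ?case using Z by simp
next
  case (Suc n)
  have "comm_subgroup G (citer G Z H n) H \<subseteq> H"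
  proof (rule comm_subgroup_sub[OF H])
    fix h k assume "h \<in> citer G Z H n" "k \<in> H"
    then show "comm G h k \<in> H" using Suc unfolding comm_def
      by (intro subgroup.m_closed[OF H] subgroup.m_inv_closed[OF H]) auto
  qed
  then show ?case by simp
qed

lemma (in group) comm_iter_sub:
  assumes H: "subgroup H G" and Z: "Z \<subseteq> H"
  shows "comm_iter (G\<lparr>carrier := H\<rparr>) Z n = citer G Z H n"
proof (induction n)
  case 0 then show ?case by simp
next
  case (Suc n)
  have sub: "citer G Z H n \<subseteq> H" by (rule citer_in_sub[OF H Z])
  have Hc: "\<And>x. x \<in> H \<Longrightarrow> x \<in> carrier G" by (rule subgroup.mem_carrier[OF H])
  have eq: "{comm (G\<lparr>carrier := H\<rparr>) h k | h k. h \<in> citer G Z H n \<and> k \<in> H}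
          = {comm G h k | h k. h \<in> citer G Z H n \<and> k \<in> H}"
  proof -
    have cf: "comm (G\<lparr>carrier := H\<rparr>) h k = comm G h k" if "h \<in> H" "k \<in> H" for h k
      using that H by (simp add: comm_def)
    show ?thesis
    proof (rule subset_antisym; rule subsetI)
      fix x assume "x \<in> {comm (G\<lparr>carrier := H\<rparr>) h k | h k. h \<in> citer G Z H n \<and> k \<in> H}"
      then obtain h k where hk: "x = comm (G\<lparr>carrier := H\<rparr>) h k" "h \<in> citer G Z H n" "k \<in> H" by auto
      have "h \<in> H" using sub hk(2) by (rule subsetD)
      then have "x = comm G h k" using hk cf by simp
      then show "x \<in> {comm G h k | h k. h \<in> citer G Z H n \<and> k \<in> H}" using hk by auto
    next
      fix x assume "x \<in> {comm G h k | h k. h \<in> citer G Z H n \<and> k \<in> H}"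
      then obtain h k where hk: "x = comm G h k" "h \<in> citer G Z H n" "k \<in> H" by auto
      have "h \<in> H" using sub hk(2) by (rule subsetD)
      then have "x = comm (G\<lparr>carrier := H\<rparr>) h k" using hk cf by simp
      then show "x \<in> {comm (G\<lparr>carrier := H\<rparr>) h k | h k. h \<in> citer G Z H n \<and> k \<in> H}" using hk by auto
    qed
  qed
  have gsub: "{comm G h k | h k. h \<in> citer G Z H n \<and> k \<in> H} \<subseteq> H"
  proof
    fix x assume "x \<in> {comm G h k | h k. h \<in> citer G Z H n \<and> k \<in> H}"
    then obtain h k where hk: "x = comm G h k" "h \<in> citer G Z H n" "k \<in> H" by auto
    have hH: "h \<in> H" using sub hk(2) by (rule subsetD)
    show "x \<in> H" unfolding hk(1) comm_def using hH hk(3)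
      by (intro subgroup.m_closed[OF H] subgroup.m_inv_closed[OF H]) auto
  qed
  show ?case using Suc eq generate_consistent[OF gsub H]
    by (simp add: comm_subgroup_def)
qed

theorem theorem2p1:
  fixes G :: "('g, 'x) monoid_scheme" and F :: "('f, 'y) monoid_scheme"
    and A B :: "'g set" and F1 F2 :: "'f set"
    and \<nu>1 \<nu>2 :: "'f \<Rightarrow> 'g"
  assumes G: "group G"
    and A_normal: "A \<lhd> G" and B_sub: "subgroup B G"
    and AB_trivial: "A \<inter> B = {\<one>\<^bsub>G\<^esub>}"
    and AB_gen: "generate G (A \<union> B) = carrier G"
    and freeprod: "free_product F F1 F2"
    and F1_free: "free_group (F\<lparr>carrier := F1\<rparr>)"
    and F2_free: "free_group (F\<lparr>carrier := F2\<rparr>)"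
    and nu1_hom: "\<nu>1 \<in> hom (F\<lparr>carrier := F1\<rparr>) G" and nu1_onto: "\<nu>1 ` F1 = A"
    and nu2_hom: "\<nu>2 \<in> hom (F\<lparr>carrier := F2\<rparr>) G" and nu2_onto: "\<nu>2 ` F2 = B"
  defines "R1 \<equiv> kernel (F\<lparr>carrier := F1\<rparr>) G \<nu>1"
    and "R2 \<equiv> kernel (F\<lparr>carrier := F2\<rparr>) G \<nu>2"
    and "S \<equiv> normal_closure F
           {inv\<^bsub>F\<^esub> f1 \<otimes>\<^bsub>F\<^esub> f1' \<otimes>\<^bsub>F\<^esub> comm F f2 f1 | f1 f1' f2.
              f1 \<in> F1 \<and> f1' \<in> F1 \<and> f2 \<in> F2 \<and>
              \<nu>1 f1' = inv\<^bsub>G\<^esub> (\<nu>2 f2) \<otimes>\<^bsub>G\<^esub> \<nu>1 f1 \<otimes>\<^bsub>G\<^esub> \<nu>2 f2}"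
  defines "R \<equiv> normal_closure F R1 <#>\<^bsub>F\<^esub> normal_closure F R2 <#>\<^bsub>F\<^esub> S"
    and "PR \<equiv> (\<lambda>c. normal_closure F
           {lcomm F r2 fs | r2 fs. r2 \<in> R2 \<and> length fs = c \<and> set fs \<subseteq> F1 \<union> F2 \<and>
                                 (\<exists>f \<in> set fs. f \<in> F1)})"
  shows "(R1 \<subseteq> S \<and> comm_subgroup F R2 F1 \<subseteq> S)
         \<and> R = R2 <#>\<^bsub>F\<^esub> S
         \<and> (\<forall>c\<ge>1. R \<inter> lower_central F (c + 1) =
               (R2 \<inter> lower_central (F\<lparr>carrier := F2\<rparr>) (c + 1)) <#>\<^bsub>F\<^esub> (S \<inter> lower_central F (c + 1)))
         \<and> (\<forall>c\<ge>1. comm_iter F R c =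
               comm_iter (F\<lparr>carrier := F2\<rparr>) R2 c <#>\<^bsub>F\<^esub> PR c <#>\<^bsub>F\<^esub> comm_iter F S c)"
proof -
  have Fg: "group F" using freeprod unfolding free_product_def by blast
  interpret F: group F by (rule Fg)
  interpret G: group G by (rule G)
  have F1sub: "subgroup F1 F" and F2sub: "subgroup F2 F"
    using freeprod unfolding free_product_def by auto
  have F1c: "\<And>x. x \<in> F1 \<Longrightarrow> x \<in> carrier F" by (rule subgroup.mem_carrier[OF F1sub])
  have F2c: "\<And>x. x \<in> F2 \<Longrightarrow> x \<in> carrier F" by (rule subgroup.mem_carrier[OF F2sub])
  have gh1: "group_hom (F\<lparr>carrier := F1\<rparr>) G \<nu>1"
    by (intro group_hom.intro group_hom_axioms.intro subgroup.subgroup_is_group[OF F1sub Fg] G nu1_hom)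
  have gh2: "group_hom (F\<lparr>carrier := F2\<rparr>) G \<nu>2"
    by (intro group_hom.intro group_hom_axioms.intro subgroup.subgroup_is_group[OF F2sub Fg] G nu2_hom)
  have nu1_one: "\<nu>1 \<one>\<^bsub>F\<^esub> = \<one>\<^bsub>G\<^esub>" using group_hom.hom_one[OF gh1] by simp
  have nu2_one: "\<nu>2 \<one>\<^bsub>F\<^esub> = \<one>\<^bsub>G\<^esub>" using group_hom.hom_one[OF gh2] by simp
  have nu1c: "\<And>x. x \<in> F1 \<Longrightarrow> \<nu>1 x \<in> carrier G" using nu1_hom unfolding hom_def by auto
  have nu2c: "\<And>x. x \<in> F2 \<Longrightarrow> \<nu>2 x \<in> carrier G" using nu2_hom unfolding hom_def by auto
  have R2F2: "R2 \<subseteq> F2" unfolding R2_def kernel_def by auto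
  have R2sub2: "subgroup R2 (F\<lparr>carrier := F2\<rparr>)" unfolding R2_def by (rule group_hom.subgroup_kernel[OF gh2])
  have R2sub: "subgroup R2 F" by (rule F.incl_subgroup[OF F2sub R2sub2])
  have R2n: "R2 \<lhd> F\<lparr>carrier := F2\<rparr>" unfolding R2_def by (rule group_hom.normal_kernel[OF gh2])
  have R2conj: "inv\<^bsub>F\<^esub> h \<otimes>\<^bsub>F\<^esub> r \<otimes>\<^bsub>F\<^esub> h \<in> R2" if "r \<in> R2" "h \<in> F2" for r h
    using normal.inv_op_closed1[OF R2n, of h r] that F.m_inv_consistent[OF F2sub] by simp
  define Rel where "Rel = {inv\<^bsub>F\<^esub> f1 \<otimes>\<^bsub>F\<^esub> f1' \<otimes>\<^bsub>F\<^esub> comm F f2 f1 | f1 f1' f2.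
              f1 \<in> F1 \<and> f1' \<in> F1 \<and> f2 \<in> F2 \<and>
              \<nu>1 f1' = inv\<^bsub>G\<^esub> (\<nu>2 f2) \<otimes>\<^bsub>G\<^esub> \<nu>1 f1 \<otimes>\<^bsub>G\<^esub> \<nu>2 f2}"
  have Relc: "Rel \<subseteq> carrier F" unfolding Rel_def using F1c F2c by auto
  have S_eq: "S = normal_closure F Rel" unfolding S_def Rel_def ..
  have Sn: "S \<lhd> F" unfolding S_eq by (rule F.nc_normal[OF Relc])
  have Ssub: "subgroup S F" by (rule normal_imp_subgroup[OF Sn])
  have RS: "comm F r f \<in> S" if r: "r \<in> R2" and f: "f \<in> F1" for r f
  proof -
    have rF2: "r \<in> F2" using r R2F2 by blast
    have nr: "\<nu>2 r = \<one>\<^bsub>G\<^esub>" using r unfolding R2_def kernel_def by simp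
    have e: "\<nu>1 f = inv\<^bsub>G\<^esub> (\<nu>2 r) \<otimes>\<^bsub>G\<^esub> \<nu>1 f \<otimes>\<^bsub>G\<^esub> \<nu>2 r"
      using nr nu1c[OF f] by simp
    have "inv\<^bsub>F\<^esub> f \<otimes>\<^bsub>F\<^esub> f \<otimes>\<^bsub>F\<^esub> comm F r f \<in> Rel" unfolding Rel_def
      by (rule CollectI, rule exI[of _ f], rule exI[of _ f], rule exI[of _ r]) (use f rF2 e in simp)
    moreover have "inv\<^bsub>F\<^esub> f \<otimes>\<^bsub>F\<^esub> f \<otimes>\<^bsub>F\<^esub> comm F r f = comm F r f"
      using F1c[OF f] F2c[OF rF2] by simp
    ultimately show ?thesis unfolding S_eq using F.nc_incl[OF Relc] by metis
  qed
  interpret X: thm_setup F F1 F2 R2 S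
    by (rule thm_setup.intro[OF Fg thm_setup_axioms.intro[OF freeprod R2sub R2F2 R2conj Sn RS]])
  have part1a: "R1 \<subseteq> S"
  proof
    fix x assume x: "x \<in> R1"
    have xF1: "x \<in> F1" and nx: "\<nu>1 x = \<one>\<^bsub>G\<^esub>" using x unfolding R1_def kernel_def by auto
    have one1: "\<one>\<^bsub>F\<^esub> \<in> F1" and one2: "\<one>\<^bsub>F\<^esub> \<in> F2"
      using subgroup.one_closed[OF F1sub] subgroup.one_closed[OF F2sub] by auto
    have "inv\<^bsub>F\<^esub> \<one>\<^bsub>F\<^esub> \<otimes>\<^bsub>F\<^esub> x \<otimes>\<^bsub>F\<^esub> comm F \<one>\<^bsub>F\<^esub> \<one>\<^bsub>F\<^esub> \<in> Rel"
      unfolding Rel_def using one1 one2 xF1 nx nu1_one nu2_one by force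
    moreover have "inv\<^bsub>F\<^esub> \<one>\<^bsub>F\<^esub> \<otimes>\<^bsub>F\<^esub> x \<otimes>\<^bsub>F\<^esub> comm F \<one>\<^bsub>F\<^esub> \<one>\<^bsub>F\<^esub> = x"
      using F1c[OF xF1] by simp
    ultimately show "x \<in> S" unfolding S_eq using F.nc_incl[OF Relc] by metis
  qed
  have part1b: "comm_subgroup F R2 F1 \<subseteq> S"
    by (rule F.comm_subgroup_sub[OF Ssub RS])
  have RSn: "R2 <#>\<^bsub>F\<^esub> S \<lhd> F" by (rule X.RS_normal)
  have RSs: "subgroup (R2 <#>\<^bsub>F\<^esub> S) F" by (rule normal_imp_subgroup[OF RSn])
  have R2RS: "R2 \<subseteq> R2 <#>\<^bsub>F\<^esub> S"
    using F.set_mult_memI[OF _ subgroup.one_closed[OF Ssub], of _ R2] X.R2c by fastforce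
  have SRS: "S \<subseteq> R2 <#>\<^bsub>F\<^esub> S"
    using F.set_mult_memI[OF subgroup.one_closed[OF R2sub], of _ S] X.Sc by fastforce
  have R1c: "R1 \<subseteq> carrier F" unfolding R1_def kernel_def using F1c by auto
  have R2c: "R2 \<subseteq> carrier F" using X.R2c by blast
  have part2: "R = R2 <#>\<^bsub>F\<^esub> S"
  proof
    have "normal_closure F R1 \<subseteq> R2 <#>\<^bsub>F\<^esub> S"
      using F.nc_min[OF Sn part1a] SRS by blast
    moreover have "normal_closure F R2 \<subseteq> R2 <#>\<^bsub>F\<^esub> S" by (rule F.nc_min[OF RSn R2RS])
    ultimately show "R \<subseteq> R2 <#>\<^bsub>F\<^esub> S" unfolding R_def
      by (intro F.set_mult_sub_subgroup[OF RSs] SRS)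
  next
    show "R2 <#>\<^bsub>F\<^esub> S \<subseteq> R"
    proof
      fix x assume "x \<in> R2 <#>\<^bsub>F\<^esub> S"
      then obtain r s where rs: "r \<in> R2" "s \<in> S" "x = r \<otimes>\<^bsub>F\<^esub> s" unfolding set_mult_def by blast
      have "r = \<one>\<^bsub>F\<^esub> \<otimes>\<^bsub>F\<^esub> r" using rs R2c by auto
      then have "r \<in> normal_closure F R1 <#>\<^bsub>F\<^esub> normal_closure F R2"
        using F.set_mult_memI[OF subgroup.one_closed[OF F.nc_subgroup[OF R1c]] F.nc_incl[OF R2c rs(1)]]
        by simp
      then show "x \<in> R" unfolding R_def rs(3) by (rule F.set_mult_memI[OF _ rs(2)])
    qed
  qed
  obtain \<pi> where \<pi>: "\<forall>x\<in>carrier F. \<pi> x \<in> F2"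
      "\<forall>x\<in>carrier F. \<forall>y\<in>carrier F. \<pi> (x \<otimes>\<^bsub>F\<^esub> y) = \<pi> x \<otimes>\<^bsub>F\<^esub> \<pi> y"
      "\<forall>x\<in>F2. \<pi> x = x" "\<forall>x\<in>F1. \<pi> x = \<one>\<^bsub>F\<^esub>"
    using F.fp_retraction[OF freeprod] by blast
  have \<pi>c: "\<And>x. x \<in> carrier F \<Longrightarrow> \<pi> x \<in> carrier F" using \<pi>(1) F2c by blast
  have \<pi>1: "\<pi> \<one>\<^bsub>F\<^esub> = \<one>\<^bsub>F\<^esub>" using \<pi>(3) subgroup.one_closed[OF F2sub] by simp
  have \<pi>inv: "\<pi> (inv\<^bsub>F\<^esub> x) = inv\<^bsub>F\<^esub> (\<pi> x)" if x: "x \<in> carrier F" for x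
  proof -
    have "\<pi> (inv\<^bsub>F\<^esub> x) \<otimes>\<^bsub>F\<^esub> \<pi> x = \<one>\<^bsub>F\<^esub>" using \<pi>(2) x \<pi>1 by (metis F.inv_closed F.l_inv)
    then show ?thesis using \<pi>c x by (simp add: F.inv_equality)
  qed
  have \<pi>S: "\<pi> s = \<one>\<^bsub>F\<^esub>" if s: "s \<in> S" for s
  proof -
    define C where "C = {x \<in> carrier F. \<pi> x = \<one>\<^bsub>F\<^esub>}"
    have Cs: "subgroup C F"
    proof (rule F.subgroupI)
      show "C \<subseteq> carrier F" unfolding C_def by blast
      have "\<one>\<^bsub>F\<^esub> \<in> C" unfolding C_def using \<pi>1 by simp
      then show "C \<noteq> {}" by blast
    next
      fix a assume "a \<in> C" then show "inv\<^bsub>F\<^esub> a \<in> C" unfolding C_def using \<pi>inv by simp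
    next
      fix a b assume "a \<in> C" "b \<in> C" then show "a \<otimes>\<^bsub>F\<^esub> b \<in> C" unfolding C_def using \<pi>(2) by simp
    qed
    have "S \<subseteq> C" unfolding S_eq
    proof (rule F.nc_closure_set[OF Cs])
      fix g x assume g: "g \<in> carrier F" and x: "x \<in> C"
      then show "inv\<^bsub>F\<^esub> g \<otimes>\<^bsub>F\<^esub> x \<otimes>\<^bsub>F\<^esub> g \<in> C" unfolding C_def
        using \<pi>(2) \<pi>inv \<pi>c by simp
    next
      show "Rel \<subseteq> C"
      proof
        fix y assume "y \<in> Rel"
        then obtain f1 f1' f2 where ff: "y = inv\<^bsub>F\<^esub> f1 \<otimes>\<^bsub>F\<^esub> f1' \<otimes>\<^bsub>F\<^esub> comm F f2 f1"
          "f1 \<in> F1" "f1' \<in> F1" "f2 \<in> F2" unfolding Rel_def by blast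
        have c: "f1 \<in> carrier F" "f1' \<in> carrier F" "f2 \<in> carrier F" using ff F1c F2c by auto
        have "\<pi> y = \<one>\<^bsub>F\<^esub>" unfolding ff(1) comm_def using c \<pi>(2) \<pi>inv \<pi>(3) \<pi>(4) ff
          by (simp add: F.m_assoc)
        then show "y \<in> C" unfolding C_def using ff(1) c by simp
      qed
    qed
    then show ?thesis using s unfolding C_def by blast
  qed
  have part3: "\<forall>c\<ge>1. R \<inter> lower_central F (c + 1) =
               (R2 \<inter> lower_central (F\<lparr>carrier := F2\<rparr>) (c + 1)) <#>\<^bsub>F\<^esub> (S \<inter> lower_central F (c + 1))"
  proof (intro allI impI)
    fix c :: nat assume "1 \<le> c"
    have e1: "lower_central F (c + 1) = citer F (carrier F) (carrier F) c"
      unfolding lower_central_def by (simp add: comm_iter_citer)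
    have e2: "lower_central (F\<lparr>carrier := F2\<rparr>) (c + 1) = citer F F2 F2 c"
      unfolding lower_central_def using F.comm_iter_sub[OF F2sub, of F2 c] by simp
    show "R \<inter> lower_central F (c + 1) =
               (R2 \<inter> lower_central (F\<lparr>carrier := F2\<rparr>) (c + 1)) <#>\<^bsub>F\<^esub> (S \<inter> lower_central F (c + 1))"
      unfolding e1 e2 part2
      by (rule X.part3[of \<pi>]) (use \<pi> \<pi>S in auto)
  qed
  have part4: "\<forall>c\<ge>1. comm_iter F R c =
               comm_iter (F\<lparr>carrier := F2\<rparr>) R2 c <#>\<^bsub>F\<^esub> PR c <#>\<^bsub>F\<^esub> comm_iter F S c"
  proof (intro allI impI)
    fix c :: nat assume c: "1 \<le> c"
    then obtain n where n: "c = Suc n" by (cases c) auto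
    have "PR c = X.P c" unfolding PR_def X.P_def X.Pgen_def ..
    moreover have "comm_iter (F\<lparr>carrier := F2\<rparr>) R2 c = citer F R2 F2 c"
      by (rule F.comm_iter_sub[OF F2sub R2F2])
    ultimately show "comm_iter F R c =
               comm_iter (F\<lparr>carrier := F2\<rparr>) R2 c <#>\<^bsub>F\<^esub> PR c <#>\<^bsub>F\<^esub> comm_iter F S c"
      unfolding part2 comm_iter_citer n using X.part4[of n] by simp
  qed
  show ?thesis using part1a part1b part2 part3 part4 by blast
qed


end
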